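(* Let $n\ge k\ge d$ be positive integers and $\boldsymbol{\alpha}_k=(\alpha_1,\dots,\alpha_k)$ a list of $k$ distinct rational numbers. Let $\mathcal{Z}_{n,k,d}(\boldsymbol{\alpha}_k)\subseteq\mathbb{Q}^{n+d}$ be the set of points $(z_1,\dots,z_n;z_{n+1},\dots,z_{n+d})$ such that every coordinate lies in $\{\alpha_1,\dots,\alpha_k\}$, the coordinates $z_{n+1},\dots,z_{n+d}$ are distinct, and $\{z_1,\dots,z_n\}=\{z_{n+1},\dots,z_{n+d}\}$. Then the vanishing ideal $\mathbf{I}(\mathcal{Z}_{n,k,d}(\boldsymbol{\alpha}_k))\subseteq\mathbb{Q}[x_1,\dots,x_n,y_1,\dots,y_d]$ is generated by \begin{itemize} \item $e_r(\boldsymbol{\alpha}_k) - e_{r-1}(\boldsymbol{\alpha}_k)h_1(\mathbf{y}_d) + \cdots + (-1)^r h_r(\mathbf{y}_d)$ for all $r>k-d$, \item $e_r(\mathbf{x}_n) - e_{r-1}(\mathbf{x}_n)h_1(\mathbf{y}_d)+\cdots+(-1)^r h_r(\mathbf{y}_d)$ for all $r>n-d$, \item $x_i^d - x_i^{d-1}e_1(\mathbf{y}_d)+\cdots+(-1)^d e_d(\mathbf{y}_d)$ for $i=1,\dots,n$. \end{itemize}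
   Context: The coordinate ring of $\mathbb{Q}^{n+d}$ is identified with $\mathbb{Q}[\mathbf{x}_n,\mathbf{y}_d]$, $\mathbf{x}_n=(x_1,\dots,x_n)$, $\mathbf{y}_d=(y_1,\dots,y_d)$. For a set $\mathcal{Z}$, $\mathbf{I}(\mathcal{Z})$ is the ideal of polynomials vanishing on $\mathcal{Z}$. $e_r,h_r$ are elementary and complete homogeneous symmetric polynomials (with $e_0=h_0=1$, $e_r=0$ when $r$ exceeds the number of variables). *)

theory Defs
  imports Complex_Main "HOL-Library.Poly_Mapping"
begin

text \<open>Multivariate polynomials over the rationals in the variables indexed by nat:
  a monomial is a finitely supported exponent map nat \<Rightarrow>0 nat, a polynomial
  a finitely supported coefficient map on monomials (product = convolution).\<close>

type_synonym mpoly = "(nat \<Rightarrow>\<^sub>0 nat) \<Rightarrow>\<^sub>0 rat"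

definition Var :: "nat \<Rightarrow> mpoly" where
  "Var i = Poly_Mapping.single (Poly_Mapping.single i 1) 1"

definition Const :: "rat \<Rightarrow> mpoly" where
  "Const c = Poly_Mapping.single 0 c"

definition vars :: "mpoly \<Rightarrow> nat set" where
  "vars p = (\<Union>m\<in>Poly_Mapping.keys p. Poly_Mapping.keys (m::nat \<Rightarrow>\<^sub>0 nat))"

definition eval :: "mpoly \<Rightarrow> (nat \<Rightarrow> rat) \<Rightarrow> rat" where
  "eval p z = (\<Sum>m\<in>Poly_Mapping.keys p. Poly_Mapping.lookup p m * (\<Prod>i\<in>Poly_Mapping.keys (m::nat \<Rightarrow>\<^sub>0 nat). z i ^ Poly_Mapping.lookup m i))"

definition polyring :: "nat \<Rightarrow> mpoly set" where
  "polyring N = {p. vars p \<subseteq> {..<N}}"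

definition ideal_gen :: "nat \<Rightarrow> mpoly set \<Rightarrow> mpoly set" where
  "ideal_gen N G = {p. \<exists>F c. finite F \<and> F \<subseteq> G \<and> (\<forall>g\<in>F. c g \<in> polyring N) \<and>
                        p = (\<Sum>g\<in>F. c g * g)}"

definition vanishing_ideal :: "nat \<Rightarrow> (nat \<Rightarrow> rat) set \<Rightarrow> mpoly set" where
  "vanishing_ideal N Z = {p \<in> polyring N. \<forall>z\<in>Z. eval p z = 0}"

definition esym :: "nat \<Rightarrow> 'a::comm_ring_1 list \<Rightarrow> 'a" where
  "esym r l = (\<Sum>S\<in>{S. S \<subseteq> {..<length l} \<and> card S = r}. \<Prod>i\<in>S. l ! i)"

definition hsym :: "nat \<Rightarrow> 'a::comm_ring_1 list \<Rightarrow> 'a" where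
  "hsym r l = (\<Sum>f\<in>{f. (\<forall>i. i \<ge> length l \<longrightarrow> f i = 0) \<and> (\<Sum>i<length l. f i) = r}.
                  \<Prod>i<length l. (l ! i) ^ f i)"

text \<open>x_i is Var (i-1) for i = 1..n, y_j is Var (n+j-1) for j = 1..d.\<close>
definition xs :: "nat \<Rightarrow> mpoly list" where "xs n = map Var [0..<n]"
definition ys :: "nat \<Rightarrow> nat \<Rightarrow> mpoly list" where "ys n d = map Var [n..<n+d]"

text \<open>Points (z_1..z_n; z_{n+1}..z_{n+d}) stored as z 0 .. z (n+d-1), zero elsewhere.\<close>
definition Zset :: "nat \<Rightarrow> nat \<Rightarrow> rat list \<Rightarrow> (nat \<Rightarrow> rat) set" where
  "Zset n d \<alpha> = {z. (\<forall>i<n+d. z i \<in> set \<alpha>) \<and> (\<forall>i\<ge>n+d. z i = 0) \<and>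
                    inj_on z {n..<n+d} \<and> z ` {..<n} = z ` {n..<n+d}}"

definition gens :: "nat \<Rightarrow> nat \<Rightarrow> nat \<Rightarrow> rat list \<Rightarrow> mpoly set" where
  "gens n k d \<alpha> =
     {(\<Sum>j\<le>r. (-1)^j * esym (r-j) (map Const \<alpha>) * hsym j (ys n d)) | r. r > k - d}
   \<union> {(\<Sum>j\<le>r. (-1)^j * esym (r-j) (xs n) * hsym j (ys n d)) | r. r > n - d}
   \<union> {(\<Sum>j\<le>d. (-1)^j * Var i ^ (d-j) * esym j (ys n d)) | i. i < n}"

end

theory Submission
  imports Defs "HOL-Library.FuncSet" "HOL-Computational_Algebra.Polynomial_FPS"
begin

unbundle fps_syntax


definition mval :: "(nat \<Rightarrow>\<^sub>0 nat) \<Rightarrow> (nat \<Rightarrow> rat) \<Rightarrow> rat" where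
  "mval m z = (\<Prod>i\<in>Poly_Mapping.keys m. z i ^ Poly_Mapping.lookup m i)"

lemma mval_superset:
  assumes "finite S" "Poly_Mapping.keys m \<subseteq> S"
  shows "mval m z = (\<Prod>i\<in>S. z i ^ Poly_Mapping.lookup m i)"
  unfolding mval_def
  by (rule prod.mono_neutral_left[OF assms]) (auto simp: in_keys_iff)

lemma mval_add: "mval (m1 + m2) z = mval m1 z * mval m2 z"
proof -
  let ?S = "Poly_Mapping.keys m1 \<union> Poly_Mapping.keys m2"
  have f: "finite ?S" by simp
  have "mval (m1 + m2) z = (\<Prod>i\<in>?S. z i ^ Poly_Mapping.lookup (m1 + m2) i)"
    by (rule mval_superset[OF f]) (rule keys_add)
  also have "\<dots> = (\<Prod>i\<in>?S. z i ^ Poly_Mapping.lookup m1 i * z i ^ Poly_Mapping.lookup m2 i)"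
    by (simp add: lookup_add power_add)
  also have "\<dots> = mval m1 z * mval m2 z"
    by (simp add: prod.distrib mval_superset[OF f])
  finally show ?thesis .
qed

lemma mval_zero[simp]: "mval 0 z = 1"
  by (simp add: mval_def)

lemma eval_superset:
  assumes "finite S" "Poly_Mapping.keys p \<subseteq> S"
  shows "eval p z = (\<Sum>m\<in>S. Poly_Mapping.lookup p m * mval m z)"
  unfolding eval_def mval_def[symmetric]
  by (rule sum.mono_neutral_left[OF assms]) (auto simp: in_keys_iff)

lemma eval_add: "eval (p + q) z = eval p z + eval q z"
proof -
  let ?S = "Poly_Mapping.keys p \<union> Poly_Mapping.keys q"
  have f: "finite ?S" by simp
  have "eval (p + q) z = (\<Sum>m\<in>?S. Poly_Mapping.lookup (p+q) m * mval m z)"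
    by (rule eval_superset[OF f]) (rule keys_add)
  also have "\<dots> = eval p z + eval q z"
    by (simp add: lookup_add algebra_simps sum.distrib eval_superset[OF f])
  finally show ?thesis .
qed

lemma eval_zero[simp]: "eval 0 z = 0"
  by (simp add: eval_def)

lemma eval_single: "eval (Poly_Mapping.single m c) z = c * mval m z"
  by (subst eval_superset[of "{m}"]) auto

lemma eval_sum: "eval (\<Sum>i\<in>S. f i) z = (\<Sum>i\<in>S. eval (f i) z)"
  by (induction S rule: infinite_finite_induct) (auto simp: eval_add)

lemma eval_uminus: "eval (- p) z = - eval p z"
  using eval_add[of p "-p" z] by simp

lemma eval_diff: "eval (p - q) z = eval p z - eval q z"
  using eval_add[of p "-q" z] by (simp add: eval_uminus)

lemma poly_repr: "p = (\<Sum>m\<in>Poly_Mapping.keys p. Poly_Mapping.single m (Poly_Mapping.lookup p m))"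
proof (rule poly_mapping_eqI)
  fix k
  show "Poly_Mapping.lookup p k = Poly_Mapping.lookup (\<Sum>m\<in>Poly_Mapping.keys p. Poly_Mapping.single m (Poly_Mapping.lookup p m)) k"
    by (cases "k \<in> Poly_Mapping.keys p")
       (auto simp: lookup_sum lookup_single when_def in_keys_iff sum.delta)
qed

lemma eval_mult: "eval (p * q) z = eval p z * eval q z"
proof -
  have "p * q = (\<Sum>m\<in>Poly_Mapping.keys p. Poly_Mapping.single m (Poly_Mapping.lookup p m)) *
                (\<Sum>m\<in>Poly_Mapping.keys q. Poly_Mapping.single m (Poly_Mapping.lookup q m))"
    using poly_repr[of p] poly_repr[of q] by simp
  also have "\<dots> = (\<Sum>m\<in>Poly_Mapping.keys p. \<Sum>m'\<in>Poly_Mapping.keys q.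
       Poly_Mapping.single (m + m') (Poly_Mapping.lookup p m * Poly_Mapping.lookup q m'))"
    by (simp add: sum_product mult_single)
  finally have "eval (p * q) z = (\<Sum>m\<in>Poly_Mapping.keys p. \<Sum>m'\<in>Poly_Mapping.keys q.
       (Poly_Mapping.lookup p m * mval m z) * (Poly_Mapping.lookup q m' * mval m' z))"
    by (simp add: eval_sum eval_single mval_add algebra_simps)
  also have "\<dots> = eval p z * eval q z"
    by (simp add: sum_product eval_def mval_def)
  finally show ?thesis .
qed

lemma eval_one[simp]: "eval 1 z = 1"
  using eval_single[of 0 1 z] by (simp add: one_poly_mapping.abs_eq[symmetric])

lemma eval_Const[simp]: "eval (Const c) z = c"
  by (simp add: Const_def eval_single)

lemma eval_Var[simp]: "eval (Var i) z = z i"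
  by (simp add: Var_def eval_single mval_def)

lemma eval_prod: "eval (\<Prod>i\<in>S. f i) z = (\<Prod>i\<in>S. eval (f i) z)"
  by (induction S rule: infinite_finite_induct) (auto simp: eval_mult)

lemma eval_power: "eval (p ^ e) z = eval p z ^ e"
  by (induction e) (auto simp: eval_mult)


lemma keys_uminus_pm: "Poly_Mapping.keys (- p) = Poly_Mapping.keys (p::mpoly)"
  by (auto simp: in_keys_iff)

lemma vars_add: "vars (p + q) \<subseteq> vars p \<union> vars q"
  unfolding vars_def using keys_add[of p q] by blast

lemma vars_uminus[simp]: "vars (- p) = vars p"
  unfolding vars_def by (simp add: keys_uminus_pm)

lemma vars_mult: "vars (p * q) \<subseteq> vars p \<union> vars q"
proof
  fix i assume "i \<in> vars (p * q)"
  then obtain m where m: "m \<in> Poly_Mapping.keys (p*q)" "i \<in> Poly_Mapping.keys m"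
    by (auto simp: vars_def)
  from m(1) keys_mult obtain a b where ab: "m = a + b" "a \<in> Poly_Mapping.keys p" "b \<in> Poly_Mapping.keys q"
    by blast
  with m(2) keys_add[of a b] show "i \<in> vars p \<union> vars q"
    by (auto simp: vars_def)
qed

lemma vars_single: "vars (Poly_Mapping.single m c) \<subseteq> Poly_Mapping.keys m"
  by (auto simp: vars_def)

lemma vars_Const[simp]: "vars (Const c) = {}"
  using vars_single[of 0 c] by (auto simp: Const_def)

lemma vars_Var: "vars (Var i) \<subseteq> {i}"
  using vars_single[of "Poly_Mapping.single i 1" 1] by (auto simp: Var_def)

lemma vars_zero[simp]: "vars 0 = {}"
  by (simp add: vars_def)

lemma vars_one[simp]: "vars 1 = {}"
  using vars_Const[of 1] by (simp add: Const_def one_poly_mapping.abs_eq[symmetric])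

lemma polyring_add[intro]: "p \<in> polyring N \<Longrightarrow> q \<in> polyring N \<Longrightarrow> p + q \<in> polyring N"
  using vars_add[of p q] by (auto simp: polyring_def)

lemma polyring_mult[intro]: "p \<in> polyring N \<Longrightarrow> q \<in> polyring N \<Longrightarrow> p * q \<in> polyring N"
  using vars_mult[of p q] by (auto simp: polyring_def)

lemma polyring_uminus[intro]: "p \<in> polyring N \<Longrightarrow> - p \<in> polyring N"
  by (auto simp: polyring_def)

lemma polyring_diff[intro]: "p \<in> polyring N \<Longrightarrow> q \<in> polyring N \<Longrightarrow> p - q \<in> polyring N"
  using polyring_add[of p N "-q"] by auto

lemma polyring_Const[intro, simp]: "Const c \<in> polyring N"
  by (auto simp: polyring_def)

lemma polyring_zero[intro, simp]: "0 \<in> polyring N"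
  by (auto simp: polyring_def)

lemma polyring_one[intro, simp]: "1 \<in> polyring N"
  by (auto simp: polyring_def)

lemma polyring_Var[intro]: "i < N \<Longrightarrow> Var i \<in> polyring N"
  using vars_Var[of i] by (auto simp: polyring_def)

lemma polyring_sum[intro]: "(\<And>i. i \<in> S \<Longrightarrow> f i \<in> polyring N) \<Longrightarrow> (\<Sum>i\<in>S. f i) \<in> polyring N"
  by (induction S rule: infinite_finite_induct) auto

lemma polyring_prod[intro]: "(\<And>i. i \<in> S \<Longrightarrow> f i \<in> polyring N) \<Longrightarrow> (\<Prod>i\<in>S. f i) \<in> polyring N"
  by (induction S rule: infinite_finite_induct) auto

lemma polyring_power[intro]: "p \<in> polyring N \<Longrightarrow> p ^ e \<in> polyring N"
  by (induction e) auto

lemma polyring_neg_one_power[intro, simp]: "(-1::mpoly) ^ e \<in> polyring N"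
  by (intro polyring_power polyring_uminus polyring_one)

lemma polyring_esym[intro]: "(\<And>x. x \<in> set l \<Longrightarrow> x \<in> polyring N) \<Longrightarrow> esym r l \<in> polyring N"
  unfolding esym_def by (intro polyring_sum polyring_prod) auto

lemma polyring_hsym[intro]: "(\<And>x. x \<in> set l \<Longrightarrow> x \<in> polyring N) \<Longrightarrow> hsym r l \<in> polyring N"
  unfolding hsym_def by (intro polyring_sum polyring_prod polyring_power) auto

lemma ig_zero[intro, simp]: "0 \<in> ideal_gen N G"
  unfolding ideal_gen_def by (rule CollectI, rule exI[of _ "{}"]) auto

lemma ig_gen[intro]: "g \<in> G \<Longrightarrow> g \<in> ideal_gen N G"
  unfolding ideal_gen_def
  by (rule CollectI, rule exI[of _ "{g}"], rule exI[of _ "\<lambda>_. 1"]) auto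

lemma ig_add[intro]:
  assumes "p \<in> ideal_gen N G" "q \<in> ideal_gen N G"
  shows "p + q \<in> ideal_gen N G"
proof -
  obtain F1 c1 where
    1: "finite F1" "F1 \<subseteq> G" "\<forall>g\<in>F1. c1 g \<in> polyring N" "p = (\<Sum>g\<in>F1. c1 g * g)"
    using assms(1) unfolding ideal_gen_def by blast
  obtain F2 c2 where
    2: "finite F2" "F2 \<subseteq> G" "\<forall>g\<in>F2. c2 g \<in> polyring N" "q = (\<Sum>g\<in>F2. c2 g * g)"
    using assms(2) unfolding ideal_gen_def by blast
  define a where "a g = (if g \<in> F1 then c1 g else 0)" for g
  define b where "b g = (if g \<in> F2 then c2 g else 0)" for g
  have fin: "finite (F1 \<union> F2)" using 1(1) 2(1) by blast
  have "p = (\<Sum>g\<in>F1 \<union> F2. a g * g)"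
    unfolding 1(4) by (rule sum.mono_neutral_cong_left[OF fin]) (auto simp: a_def)
  moreover have "q = (\<Sum>g\<in>F1 \<union> F2. b g * g)"
    unfolding 2(4) by (rule sum.mono_neutral_cong_left[OF fin]) (auto simp: b_def)
  ultimately have "p + q = (\<Sum>g\<in>F1 \<union> F2. a g * g + b g * g)"
    by (simp only: sum.distrib)
  also have "\<dots> = (\<Sum>g\<in>F1 \<union> F2. (a g + b g) * g)"
    by (simp only: distrib_right)
  finally have eq: "p + q = (\<Sum>g\<in>F1 \<union> F2. (a g + b g) * g)" .
  have pr: "\<forall>g\<in>F1 \<union> F2. a g + b g \<in> polyring N"
    using 1(3) 2(3) unfolding a_def b_def by (intro ballI polyring_add) auto
  have sub: "F1 \<union> F2 \<subseteq> G" using 1(2) 2(2) by blast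
  show ?thesis unfolding ideal_gen_def
    by (rule CollectI, rule exI[of _ "F1 \<union> F2"], rule exI[of _ "\<lambda>g. a g + b g"])
       (intro conjI fin sub pr eq)
qed

lemma ig_mult[intro]:
  assumes "r \<in> polyring N" "p \<in> ideal_gen N G"
  shows "r * p \<in> ideal_gen N G"
proof -
  obtain F c where
    1: "finite F" "F \<subseteq> G" "\<forall>g\<in>F. c g \<in> polyring N" "p = (\<Sum>g\<in>F. c g * g)"
    using assms(2) unfolding ideal_gen_def by blast
  have eq: "r * p = (\<Sum>g\<in>F. (r * c g) * g)" by (simp add: 1(4) sum_distrib_left mult.assoc)
  have pr: "\<forall>g\<in>F. r * c g \<in> polyring N" using 1(3) assms(1) by (intro ballI polyring_mult) auto
  show ?thesis unfolding ideal_gen_def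
    by (rule CollectI, rule exI[of _ F], rule exI[of _ "\<lambda>g. r * c g"])
       (intro conjI 1(1) 1(2) pr eq)
qed

lemma ig_mult_right[intro]:
  "r \<in> polyring N \<Longrightarrow> p \<in> ideal_gen N G \<Longrightarrow> p * r \<in> ideal_gen N G"
  using ig_mult[of r N p G] by (simp add: mult.commute)

lemma ig_uminus[intro]: "p \<in> ideal_gen N G \<Longrightarrow> - p \<in> ideal_gen N G"
proof -
  assume "p \<in> ideal_gen N G"
  from ig_mult[OF polyring_uminus[OF polyring_one] this] show ?thesis by simp
qed

lemma ig_diff[intro]: "p \<in> ideal_gen N G \<Longrightarrow> q \<in> ideal_gen N G \<Longrightarrow> p - q \<in> ideal_gen N G"
  using ig_add[of p N G "-q"] ig_uminus[of q N G] by simp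

lemma ig_sum[intro]: "(\<And>i. i \<in> S \<Longrightarrow> f i \<in> ideal_gen N G) \<Longrightarrow> (\<Sum>i\<in>S. f i) \<in> ideal_gen N G"
proof (induction S rule: infinite_finite_induct)
  case (insert x F) then show ?case by (simp add: ig_add)
qed auto

lemma ig_subset_polyring:
  assumes "G \<subseteq> polyring N" shows "ideal_gen N G \<subseteq> polyring N"
proof
  fix p assume "p \<in> ideal_gen N G"
  then obtain F c where
    1: "finite F" "F \<subseteq> G" "\<forall>g\<in>F. c g \<in> polyring N" "p = (\<Sum>g\<in>F. c g * g)"
    unfolding ideal_gen_def by blast
  show "p \<in> polyring N" unfolding 1(4)
    by (rule polyring_sum, rule polyring_mult) (use 1 assms in auto)
qed

lemma Const_add: "Const (a + b) = Const a + Const b"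
  by (simp add: Const_def single_add)
lemma Const_mult: "Const (a * b) = Const a * Const b"
  by (simp add: Const_def mult_single)
lemma Const_zero[simp]: "Const 0 = 0"
  by (simp add: Const_def)
lemma Const_one[simp]: "Const 1 = 1"
  by (simp add: Const_def one_poly_mapping.abs_eq[symmetric])
lemma Const_uminus: "Const (- a) = - Const a"
  by (simp add: Const_def single_uminus)
lemma Const_diff: "Const (a - b) = Const a - Const b"
  by (simp add: Const_def single_diff)
lemma Const_sum: "Const (\<Sum>i\<in>S. f i) = (\<Sum>i\<in>S. Const (f i))"
  by (induction S rule: infinite_finite_induct) (auto simp: Const_add)
lemma Const_prod: "Const (\<Prod>i\<in>S. f i) = (\<Prod>i\<in>S. Const (f i))"
  by (induction S rule: infinite_finite_induct) (auto simp: Const_mult)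
lemma Const_power: "Const (a ^ e) = Const a ^ e"
  by (induction e) (auto simp: Const_mult)

section \<open>Monomials and substitution\<close>

lemma Var_power: "Var i ^ e = Poly_Mapping.single (Poly_Mapping.single i e) 1"
  by (induction e) (auto simp: Var_def mult_single single_add[symmetric] one_poly_mapping.abs_eq[symmetric])

lemma prod_single1: "finite S \<Longrightarrow> (\<Prod>i\<in>S. Poly_Mapping.single (f i) (1::rat)) = Poly_Mapping.single (\<Sum>i\<in>S. f i) 1"
  by (induction S rule: finite_induct) (auto simp: mult_single one_poly_mapping.abs_eq[symmetric])

lemma mono_repr: "Poly_Mapping.single m (1::rat) = (\<Prod>i\<in>Poly_Mapping.keys m. Var i ^ Poly_Mapping.lookup m i)"
proof -
  have "(\<Sum>i\<in>Poly_Mapping.keys m. Poly_Mapping.single i (Poly_Mapping.lookup m i)) = m"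
  proof (rule poly_mapping_eqI)
    fix k show "Poly_Mapping.lookup (\<Sum>i\<in>Poly_Mapping.keys m. Poly_Mapping.single i (Poly_Mapping.lookup m i)) k = Poly_Mapping.lookup m k"
      by (cases "k \<in> Poly_Mapping.keys m") (auto simp: lookup_sum lookup_single when_def in_keys_iff)
  qed
  then show ?thesis by (simp add: Var_power prod_single1)
qed

lemma single_as_Const: "Poly_Mapping.single m c = Const c * Poly_Mapping.single m 1"
  by (simp add: Const_def mult_single)

lemma poly_repr2: "p = (\<Sum>m\<in>Poly_Mapping.keys p. Const (Poly_Mapping.lookup p m) * (\<Prod>i\<in>Poly_Mapping.keys m. Var i ^ Poly_Mapping.lookup m i))"
proof -
  have "p = (\<Sum>m\<in>Poly_Mapping.keys p. Poly_Mapping.single m (Poly_Mapping.lookup p m))"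
    by (rule poly_repr)
  also have "\<dots> = (\<Sum>m\<in>Poly_Mapping.keys p. Const (Poly_Mapping.lookup p m) * (\<Prod>i\<in>Poly_Mapping.keys m. Var i ^ Poly_Mapping.lookup m i))"
    by (rule sum.cong[OF refl], subst single_as_Const, subst mono_repr, rule refl)
  finally show ?thesis .
qed

lemma subst_lemma:
  fixes I G :: "mpoly set" and E :: mpoly and N :: nat and z :: "nat \<Rightarrow> rat"
  defines "I \<equiv> ideal_gen N G"
  assumes E: "E \<in> polyring N" and p: "p \<in> polyring N"
    and hyp: "\<And>i. i \<in> vars p \<Longrightarrow> E * (Var i - Const (z i)) \<in> I"
  shows "E * p - Const (eval p z) * E \<in> I"
proof -
  have mul: "E * (u * w) - Const (c * c') * E \<in> I"
    if "E * u - Const c * E \<in> I" "E * w - Const c' * E \<in> I" "u \<in> polyring N" "w \<in> polyring N" for u w c c'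
  proof -
    have "E * (u * w) - Const (c * c') * E = (E * u - Const c * E) * w + Const c * (E * w - Const c' * E)"
      by (simp add: Const_mult algebra_simps)
    then show ?thesis using that unfolding I_def by auto
  qed
  have pw: "E * (Var i ^ e) - Const (z i ^ e) * E \<in> I" if "i \<in> vars p" for i e
  proof (induction e)
    case 0 then show ?case by (simp add: I_def)
  next
    case (Suc e)
    have iN: "i < N" using that p by (auto simp: polyring_def)
    have "E * Var i - Const (z i) * E \<in> I" using hyp[OF that] by (simp add: algebra_simps)
    from mul[OF this Suc] show ?case using iN by (auto simp: algebra_simps)
  qed
  have mono: "E * (\<Prod>i\<in>S. Var i ^ e i) - Const (\<Prod>i\<in>S. z i ^ e i) * E \<in> I"
    if "finite S" "S \<subseteq> vars p" for S e
    using that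
  proof (induction S rule: finite_induct)
    case empty then show ?case by (simp add: I_def)
  next
    case (insert i S)
    have iN: "i < N" using insert p by (auto simp: polyring_def)
    have "(\<Prod>i\<in>S. Var i ^ e i) \<in> polyring N"
      using insert p by (intro polyring_prod polyring_power polyring_Var) (auto simp: polyring_def)
    from mul[OF pw[of i "e i"] insert(3), OF _ _ polyring_power[OF polyring_Var[OF iN]] this] insert
    show ?case by auto
  qed
  have "E * p - Const (eval p z) * E =
     (\<Sum>m\<in>Poly_Mapping.keys p. Const (Poly_Mapping.lookup p m) *
        (E * (\<Prod>i\<in>Poly_Mapping.keys m. Var i ^ Poly_Mapping.lookup m i)
          - Const (\<Prod>i\<in>Poly_Mapping.keys m. z i ^ Poly_Mapping.lookup m i) * E))"
  proof -
    have "E * p = (\<Sum>m\<in>Poly_Mapping.keys p. Const (Poly_Mapping.lookup p m) *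
        (E * (\<Prod>i\<in>Poly_Mapping.keys m. Var i ^ Poly_Mapping.lookup m i)))"
    proof -
      have "E * p = E * (\<Sum>m\<in>Poly_Mapping.keys p. Const (Poly_Mapping.lookup p m) * (\<Prod>i\<in>Poly_Mapping.keys m. Var i ^ Poly_Mapping.lookup m i))"
        by (rule arg_cong[where f="\<lambda>x. E * x"], rule poly_repr2)
      then show ?thesis by (simp add: sum_distrib_left mult.left_commute)
    qed
    moreover have "Const (eval p z) * E = (\<Sum>m\<in>Poly_Mapping.keys p. Const (Poly_Mapping.lookup p m) *
        (Const (\<Prod>i\<in>Poly_Mapping.keys m. z i ^ Poly_Mapping.lookup m i) * E))"
      by (simp add: eval_def Const_sum Const_mult sum_distrib_right sum_distrib_left mult.commute mult.left_commute)
    ultimately show ?thesis by (simp add: sum_subtractf right_diff_distrib)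
  qed
  also have "\<dots> \<in> I"
    unfolding I_def
  proof (intro ig_sum ig_mult polyring_Const)
    fix m assume "m \<in> Poly_Mapping.keys p"
    then have "Poly_Mapping.keys m \<subseteq> vars p" by (auto simp: vars_def)
    from mono[OF _ this] show "E * (\<Prod>i\<in>Poly_Mapping.keys m. Var i ^ Poly_Mapping.lookup m i) -
          Const (\<Prod>i\<in>Poly_Mapping.keys m. z i ^ Poly_Mapping.lookup m i) * E \<in> ideal_gen N G"
      by (simp add: I_def)
  qed
  finally show ?thesis .
qed



section \<open>Symmetric functions: recursions\<close>

definition Cs :: "nat \<Rightarrow> nat \<Rightarrow> nat set set" where
  "Cs L r = {S. S \<subseteq> {..<L} \<and> card S = r}"

lemma finite_Cs[simp]: "finite (Cs L r)"
  unfolding Cs_def by (rule finite_subset[of _ "Pow {..<L}"]) auto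

lemma esym_Cs: "esym r l = (\<Sum>S\<in>Cs (length l) r. \<Prod>i\<in>S. l ! i)"
  by (simp add: esym_def Cs_def)

lemma esym_zero_arg: "esym 0 l = 1"
proof -
  have "Cs (length l) 0 = {{}}"
    unfolding Cs_def using finite_subset[OF _ finite_lessThan] by (auto simp: card_eq_0_iff)
  then show ?thesis by (simp add: esym_Cs)
qed

lemma esym_big: "length l < r \<Longrightarrow> esym r l = 0"
proof -
  assume a: "length l < r"
  have "S \<notin> Cs (length l) r" for S
  proof
    assume "S \<in> Cs (length l) r"
    then have S: "S \<subseteq> {..<length l}" "card S = r" by (auto simp: Cs_def)
    have "card S \<le> card {..<length l}" by (rule card_mono[OF finite_lessThan S(1)])
    with S(2) a show False by simp
  qed
  then have "Cs (length l) r = {}" by blast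
  then show ?thesis by (simp add: esym_Cs)
qed
lemma Cs_Suc: "Cs (Suc L) (Suc r) = Cs L (Suc r) \<union> insert L ` Cs L r"
proof (intro equalityI subsetI)
  fix S assume S: "S \<in> Cs (Suc L) (Suc r)"
  then have fS: "finite S" by (auto simp: Cs_def intro: finite_subset[of _ "{..<Suc L}"])
  show "S \<in> Cs L (Suc r) \<union> insert L ` Cs L r"
  proof (cases "L \<in> S")
    case True
    then have "S = insert L (S - {L})" by auto
    moreover have "S - {L} \<in> Cs L r"
      using S True fS by (auto simp: Cs_def)
    ultimately show ?thesis by blast
  next
    case False
    then have "S \<in> Cs L (Suc r)" using S by (auto simp: Cs_def less_Suc_eq)
    then show ?thesis by blast
  qed
next
  fix S assume "S \<in> Cs L (Suc r) \<union> insert L ` Cs L r"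
  then show "S \<in> Cs (Suc L) (Suc r)"
  proof
    assume "S \<in> Cs L (Suc r)" then show ?thesis by (auto simp: Cs_def)
  next
    assume "S \<in> insert L ` Cs L r"
    then obtain T where T: "T \<in> Cs L r" "S = insert L T" by blast
    then have "finite T" "L \<notin> T" by (auto simp: Cs_def intro: finite_subset[of _ "{..<L}"])
    then show ?thesis using T by (auto simp: Cs_def)
  qed
qed

lemma esym_snoc: "esym (Suc r) (l @ [x]) = esym (Suc r) l + x * esym r l"
proof -
  let ?L = "length l"
  have disj: "Cs ?L (Suc r) \<inter> insert ?L ` Cs ?L r = {}" by (auto simp: Cs_def)
  have inj: "inj_on (insert ?L) (Cs ?L r)"
  proof (rule inj_onI)
    fix S T assume "S \<in> Cs ?L r" "T \<in> Cs ?L r" and eq: "insert ?L S = insert ?L T"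
    then have "?L \<notin> S" "?L \<notin> T" by (auto simp: Cs_def)
    then show "S = T" using eq by (metis Diff_insert_absorb)
  qed
  have 1: "(\<Prod>i\<in>S. (l @ [x]) ! i) = (\<Prod>i\<in>S. l ! i)" if "S \<in> Cs ?L (Suc r)" for S
    using that by (intro prod.cong) (auto simp: Cs_def nth_append)
  have 2: "(\<Prod>i\<in>insert ?L S. (l @ [x]) ! i) = x * (\<Prod>i\<in>S. l ! i)" if "S \<in> Cs ?L r" for S
  proof -
    have "finite S" "?L \<notin> S" using that by (auto simp: Cs_def intro: finite_subset[of _ "{..<length l}"])
    then have "(\<Prod>i\<in>insert ?L S. (l @ [x]) ! i) = x * (\<Prod>i\<in>S. (l @ [x]) ! i)"
      by (simp add: nth_append)
    also have "(\<Prod>i\<in>S. (l @ [x]) ! i) = (\<Prod>i\<in>S. l ! i)"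
      using that by (intro prod.cong) (auto simp: Cs_def nth_append)
    finally show ?thesis .
  qed
  have "esym (Suc r) (l @ [x]) = (\<Sum>S\<in>Cs ?L (Suc r) \<union> insert ?L ` Cs ?L r. \<Prod>i\<in>S. (l @ [x]) ! i)"
    by (simp add: esym_Cs Cs_Suc)
  also have "\<dots> = (\<Sum>S\<in>Cs ?L (Suc r). \<Prod>i\<in>S. (l @ [x]) ! i) + (\<Sum>S\<in>insert ?L ` Cs ?L r. \<Prod>i\<in>S. (l @ [x]) ! i)"
    by (rule sum.union_disjoint) (use disj in auto)
  also have "(\<Sum>S\<in>insert ?L ` Cs ?L r. \<Prod>i\<in>S. (l @ [x]) ! i) = (\<Sum>S\<in>Cs ?L r. \<Prod>i\<in>insert ?L S. (l @ [x]) ! i)"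
    by (rule sum.reindex[OF inj, unfolded comp_def])
  also have "\<dots> = x * esym r l"
    by (simp add: 2 esym_Cs sum_distrib_left)
  also have "(\<Sum>S\<in>Cs ?L (Suc r). \<Prod>i\<in>S. (l @ [x]) ! i) = esym (Suc r) l"
    by (simp add: 1 esym_Cs)
  finally show ?thesis .
qed

definition Fs :: "nat \<Rightarrow> nat \<Rightarrow> (nat \<Rightarrow> nat) set" where
  "Fs L r = {f. (\<forall>i. i \<ge> L \<longrightarrow> f i = 0) \<and> (\<Sum>i<L. f i) = r}"

lemma finite_Fs[simp]: "finite (Fs L r)"
proof -
  have "Fs L r \<subseteq> (\<lambda>g i. if i < L then g i else 0) ` (PiE {..<L} (\<lambda>_. {..r}))"
  proof
    fix f assume f: "f \<in> Fs L r"
    have "f = (\<lambda>i. if i < L then restrict f {..<L} i else 0)"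
      using f by (auto simp: Fs_def)
    moreover have "restrict f {..<L} \<in> PiE {..<L} (\<lambda>_. {..r})"
    proof -
      have "f i \<le> r" if "i < L" for i
        using f that member_le_sum[of i "{..<L}" f] by (auto simp: Fs_def)
      then show ?thesis by auto
    qed
    ultimately show "f \<in> (\<lambda>g i. if i < L then g i else 0) ` (PiE {..<L} (\<lambda>_. {..r}))" by blast
  qed
  then show ?thesis by (rule finite_subset) (auto intro: finite_PiE)
qed

lemma hsym_Fs: "hsym r l = (\<Sum>f\<in>Fs (length l) r. \<Prod>i<length l. (l ! i) ^ f i)"
  by (simp add: hsym_def Fs_def)

lemma hsym_Nil: "hsym r [] = (if r = 0 then 1 else 0)"
proof -
  have "Fs 0 r = (if r = 0 then {\<lambda>_. 0} else {})" by (auto simp: Fs_def)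
  then show ?thesis by (simp add: hsym_Fs)
qed

lemma hsym_snoc: "hsym j (l @ [x]) = (\<Sum>i\<le>j. hsym i l * x ^ (j - i))"
proof -
  let ?L = "length l"
  let ?T = "Sigma {..j} (\<lambda>i. Fs ?L i)"
  have "(\<Sum>i\<le>j. hsym i l * x ^ (j - i)) = (\<Sum>i\<le>j. \<Sum>g\<in>Fs ?L i. (\<Prod>k<?L. (l ! k) ^ g k) * x ^ (j - i))"
    by (simp add: hsym_Fs sum_distrib_right)
  also have "\<dots> = (\<Sum>(i, g)\<in>?T. (\<Prod>k<?L. (l ! k) ^ g k) * x ^ (j - i))"
    by (rule sum.Sigma) auto
  also have "\<dots> = (\<Sum>f\<in>Fs (Suc ?L) j. \<Prod>k<Suc ?L. ((l @ [x]) ! k) ^ f k)"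
  proof (rule sum.reindex_bij_witness[where i = "\<lambda>f. (j - f ?L, f(?L := 0))" and j = "\<lambda>(i, g). g(?L := j - i)"])
    fix a assume a: "a \<in> ?T"
    then obtain i g where ig: "a = (i, g)" "i \<le> j" "g \<in> Fs ?L i" by auto
    then have gL: "g ?L = 0" by (auto simp: Fs_def)
    show "(j - (case a of (i, g) \<Rightarrow> g(?L := j - i)) ?L, (case a of (i, g) \<Rightarrow> g(?L := j - i))(?L := 0)) = a"
      using ig gL by auto
    have "(\<Sum>k<Suc ?L. (g(?L := j - i)) k) = (\<Sum>k<?L. g k) + (j - i)"
      by (simp add: sum.lessThan_Suc)
    also have "(\<Sum>k<?L. g k) = i" using ig by (simp add: Fs_def)
    finally show "(case a of (i, g) \<Rightarrow> g(?L := j - i)) \<in> Fs (Suc ?L) j"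
      using ig by (auto simp: Fs_def)
    have "(\<Prod>k<Suc ?L. ((l @ [x]) ! k) ^ (g(?L := j - i)) k) = (\<Prod>k<?L. (l ! k) ^ g k) * x ^ (j - i)"
      by (simp add: prod.lessThan_Suc nth_append)
    then show "(\<Prod>k<Suc ?L. ((l @ [x]) ! k) ^ (case a of (i, g) \<Rightarrow> g(?L := j - i)) k) =
       (case a of (i, g) \<Rightarrow> (\<Prod>k<?L. (l ! k) ^ g k) * x ^ (j - i))"
      using ig by simp
  next
    fix f assume f: "f \<in> Fs (Suc ?L) j"
    have sum: "(\<Sum>k<?L. f k) + f ?L = j" using f by (simp add: Fs_def sum.lessThan_Suc)
    show "(case (j - f ?L, f(?L := 0)) of (i, g) \<Rightarrow> g(?L := j - i)) = f"
      using sum by auto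
    have "(\<Sum>k<?L. (f(?L := 0)) k) = (\<Sum>k<?L. f k)" by (rule sum.cong) auto
    then show "(j - f ?L, f(?L := 0)) \<in> ?T"
      using f sum by (auto simp: Fs_def)
  qed
  also have "\<dots> = hsym j (l @ [x])" by (simp add: hsym_Fs)
  finally show ?thesis by simp
qed



section \<open>Generating functions\<close>

definition EF :: "'a::comm_ring_1 list \<Rightarrow> 'a fps" where
  "EF l = prod_list (map (\<lambda>a. 1 + fps_const a * fps_X) l)"

definition geo :: "'a::comm_ring_1 \<Rightarrow> 'a fps" where
  "geo y = Abs_fps (\<lambda>i. (- y) ^ i)"

definition HF :: "'a::comm_ring_1 list \<Rightarrow> 'a fps" where
  "HF l = prod_list (map geo l)"

lemma lin_nth:
  fixes F :: "'a::comm_ring_1 fps"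
  shows
  "(F * (1 + fps_const c * fps_X)) $ n = F $ n + (if n = 0 then 0 else c * F $ (n - 1))"
proof -
  have "F * (1 + fps_const c * fps_X) = F + F * (fps_const c * fps_X)"
    by (simp only: distrib_left mult_1_right)
  also have "F * (fps_const c * fps_X) = fps_const c * (fps_X * F)"
    by (simp only: ac_simps)
  finally have "F * (1 + fps_const c * fps_X) = F + fps_const c * (fps_X * F)" .
  then show ?thesis by simp
qed

lemma EF_Nil[simp]: "EF [] = 1" by (simp add: EF_def)
lemma EF_snoc: "EF (l @ [x]) = EF l * (1 + fps_const x * fps_X)" by (simp add: EF_def)
lemma EF_Cons: "EF (x # l) = (1 + fps_const x * fps_X) * EF l" by (simp add: EF_def)
lemma EF_append: "EF (l1 @ l2) = EF l1 * EF l2" by (simp add: EF_def)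

lemma EF_nth: "EF l $ r = esym r l"
proof (induction l arbitrary: r rule: rev_induct)
  case Nil
  then show ?case
    by (cases r) (auto simp: esym_zero_arg esym_big)
next
  case (snoc x l)
  show ?case
  proof (cases r)
    case 0 then show ?thesis using snoc by (simp add: EF_snoc lin_nth esym_zero_arg)
  next
    case (Suc r') then show ?thesis using snoc by (simp add: EF_snoc lin_nth esym_snoc)
  qed
qed

lemma geo_inv: "geo y * (1 + fps_const y * fps_X) = 1"
proof (rule fps_ext)
  fix n show "(geo y * (1 + fps_const y * fps_X)) $ n = 1 $ n"
    by (cases n) (simp_all add: lin_nth geo_def)
qed

lemma HF_Nil[simp]: "HF [] = 1" by (simp add: HF_def)
lemma HF_snoc: "HF (l @ [x]) = HF l * geo x" by (simp add: HF_def)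
lemma HF_Cons: "HF (x # l) = geo x * HF l" by (simp add: HF_def)
lemma HF_append: "HF (l1 @ l2) = HF l1 * HF l2" by (simp add: HF_def)

lemma HF_EF: "HF l * EF l = 1"
proof (induction l)
  case (Cons x l)
  have "HF (x # l) * EF (x # l) = (geo x * (1 + fps_const x * fps_X)) * (HF l * EF l)"
    by (simp add: HF_Cons EF_Cons algebra_simps)
  then show ?case using Cons by (simp add: geo_inv)
qed simp

lemma HF_nth: "HF l $ j = (-1) ^ j * hsym j l"
proof (induction l arbitrary: j rule: rev_induct)
  case Nil
  then show ?case by (cases j) (auto simp: hsym_Nil)
next
  case (snoc x l)
  have "HF (l @ [x]) $ j = (\<Sum>i=0..j. HF l $ i * geo x $ (j - i))"
    by (simp add: HF_snoc fps_mult_nth)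
  also have "\<dots> = (\<Sum>i\<le>j. (-1) ^ j * (hsym i l * x ^ (j - i)))"
  proof (rule sum.cong)
    fix i assume "i \<in> {..j}"
    then have ij: "i + (j - i) = j" by simp
    have "HF l $ i * geo x $ (j - i) = ((-1) ^ i * (-1) ^ (j - i)) * (hsym i l * x ^ (j - i))"
      by (simp add: snoc geo_def power_minus[of x] algebra_simps)
    also have "(-1::'a) ^ i * (-1) ^ (j - i) = (-1) ^ j"
      by (simp add: power_add[symmetric] ij)
    finally show "HF l $ i * geo x $ (j - i) = (-1) ^ j * (hsym i l * x ^ (j - i))" .
  qed (simp add: atLeast0AtMost)
  also have "\<dots> = (-1) ^ j * hsym j (l @ [x])"
    by (simp add: hsym_snoc sum_distrib_left)
  finally show ?case .
qed

definition Sf :: "nat \<Rightarrow> 'a::comm_ring_1 list \<Rightarrow> 'a list \<Rightarrow> 'a" where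
  "Sf r u v = (\<Sum>j\<le>r. (-1) ^ j * esym (r - j) u * hsym j v)"

lemma Sf_nth: "(HF v * EF u) $ r = Sf r u v"
proof -
  have "(HF v * EF u) $ r = (\<Sum>i=0..r. HF v $ i * EF u $ (r - i))" by (rule fps_mult_nth)
  also have "\<dots> = Sf r u v" unfolding Sf_def atLeast0AtMost
    by (rule sum.cong[OF refl]) (simp add: HF_nth EF_nth)
  finally show ?thesis .
qed

lemma master:
  fixes l :: "'a::comm_ring_1 list"
  shows "(\<Prod>i<length l. l ! i + w) = (\<Sum>i\<le>length l. esym i l * w ^ (length l - i))"
proof -
  let ?L = "length l"
  have "(\<Prod>i<?L. l ! i + w) = (\<Sum>S\<in>Pow {..<?L}. (\<Prod>i\<in>S. l ! i) * (\<Prod>i\<in>{..<?L} - S. w))"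
    by (rule prod_add) simp
  also have "\<dots> = (\<Sum>S\<in>Pow {..<?L}. (\<Prod>i\<in>S. l ! i) * w ^ (?L - card S))"
  proof (rule sum.cong[OF refl])
    fix S assume "S \<in> Pow {..<?L}"
    then have "S \<subseteq> {..<?L}" by auto
    then have "card ({..<?L} - S) = ?L - card S"
      by (simp add: card_Diff_subset finite_subset)
    then show "(\<Prod>i\<in>S. l ! i) * (\<Prod>i\<in>{..<?L} - S. w) = (\<Prod>i\<in>S. l ! i) * w ^ (?L - card S)"
      by simp
  qed
  also have "Pow {..<?L} = (\<Union>i\<in>{..?L}. Cs ?L i)"
  proof (intro equalityI subsetI)
    fix S assume "S \<in> Pow {..<?L}"
    then have S: "S \<subseteq> {..<?L}" by auto
    have "card S \<le> card {..<?L}" by (rule card_mono[OF finite_lessThan S])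
    then show "S \<in> (\<Union>i\<in>{..?L}. Cs ?L i)" using S by (auto simp: Cs_def)
  qed (auto simp: Cs_def)
  also have "(\<Sum>S\<in>(\<Union>i\<in>{..?L}. Cs ?L i). (\<Prod>i\<in>S. l ! i) * w ^ (?L - card S)) =
       (\<Sum>i\<le>?L. \<Sum>S\<in>Cs ?L i. (\<Prod>i\<in>S. l ! i) * w ^ (?L - card S))"
    by (rule sum.UNION_disjoint) (auto simp: Cs_def)
  also have "\<dots> = (\<Sum>i\<le>?L. esym i l * w ^ (?L - i))"
    by (rule sum.cong[OF refl]) (simp add: esym_Cs sum_distrib_right Cs_def)
  finally show ?thesis .
qed

lemma EF_geo_nth:
  fixes l :: "'a::comm_ring_1 list"
  shows "(EF l * geo y) $ length l = (\<Prod>i<length l. l ! i - y)"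
proof -
  have "(EF l * geo y) $ length l = (\<Sum>i\<le>length l. esym i l * (- y) ^ (length l - i))"
    by (simp add: fps_mult_nth EF_nth geo_def atLeast0AtMost)
  also have "\<dots> = (\<Prod>i<length l. l ! i + (- y))" by (rule master[symmetric])
  finally show ?thesis by simp
qed

lemma prod_neg: "finite S \<Longrightarrow> (\<Prod>i\<in>S. - f i) = (-1) ^ card S * (\<Prod>i\<in>S. f i :: 'a::comm_ring_1)"
  by (induction S rule: finite_induct) auto

lemma esym_uminus: "esym j (map uminus m) = (-1) ^ j * esym j (m::'a::comm_ring_1 list)"
proof -
  have "(\<Prod>i\<in>S. map uminus m ! i) = (-1) ^ j * (\<Prod>i\<in>S. m ! i)" if "S \<in> Cs (length m) j" for S
  proof -
    have "(\<Prod>i\<in>S. map uminus m ! i) = (\<Prod>i\<in>S. (-1) * m ! i)"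
      using that by (intro prod.cong) (auto simp: Cs_def)
    also have "\<dots> = (-1) ^ card S * (\<Prod>i\<in>S. m ! i)"
      using prod_neg[of S "\<lambda>i. m ! i"] that finite_subset[of S "{..<length m}"] by (simp add: Cs_def)
    finally show ?thesis using that by (simp add: Cs_def)
  qed
  then show ?thesis by (simp add: esym_Cs sum_distrib_left)
qed

lemma id3:
  fixes m :: "'a::comm_ring_1 list"
  shows "(\<Sum>j\<le>length m. (-1) ^ j * w ^ (length m - j) * esym j m) = (\<Prod>i<length m. w - m ! i)"
proof -
  have "(\<Prod>i<length m. w - m ! i) = (\<Prod>i<length (map uminus m). map uminus m ! i + w)"
    by (intro prod.cong) auto
  also have "\<dots> = (\<Sum>j\<le>length m. esym j (map uminus m) * w ^ (length m - j))"
    by (subst master) simp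
  also have "\<dots> = (\<Sum>j\<le>length m. (-1) ^ j * w ^ (length m - j) * esym j m)"
    by (simp add: esym_uminus algebra_simps)
  finally show ?thesis by simp
qed



lemma EF_mset: "mset u = mset u' \<Longrightarrow> EF u = EF u'"
proof -
  assume "mset u = mset u'"
  then have "mset (map (\<lambda>a. 1 + fps_const a * fps_X) u) = mset (map (\<lambda>a. 1 + fps_const a * fps_X) u')"
    by simp
  then show ?thesis unfolding EF_def by (metis prod_mset_prod_list)
qed

lemma Sf_forward:
  fixes u v :: "'a::comm_ring_1 list"
  assumes sub: "mset v \<subseteq># mset u" and r: "r > length u - length v"
  shows "Sf r u v = 0"
proof -
  obtain w where w: "mset w = mset u - mset v" using ex_mset by blast
  have "mset (v @ w) = mset u" using sub w by (simp add: subset_mset.add_diff_inverse)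
  then have "EF u = EF v * EF w" by (metis EF_mset EF_append)
  then have "HF v * EF u = (HF v * EF v) * EF w" by (simp add: mult.assoc)
  then have "HF v * EF u = EF w" by (simp add: HF_EF)
  moreover have "length w = length u - length v"
    using w sub by (metis size_Diff_submset size_mset)
  ultimately show ?thesis using r Sf_nth[of v u r] by (simp add: EF_nth esym_big)
qed

definition EP :: "'a::comm_ring_1 list \<Rightarrow> 'a poly" where
  "EP u = prod_list (map (\<lambda>a. [:1, a:]) u)"

lemma EP_Nil[simp]: "EP [] = 1" by (simp add: EP_def)
lemma EP_Cons: "EP (a # u) = [:1, a:] * EP u" by (simp add: EP_def del: mult_pCons_left)

lemma fps_EP: "fps_of_poly (EP u) = EF u"
proof (induction u)
  case (Cons a u)
  have "fps_of_poly [:1, a:] = 1 + fps_const a * fps_X"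
    by (rule fps_ext) (simp add: fps_of_poly_nth coeff_pCons split: nat.split)
  then show ?case using Cons by (simp only: EP_Cons EF_Cons fps_of_poly_mult)
qed (simp add: EF_def)

lemma poly_EP: "poly (EP u) t = (\<Prod>a\<leftarrow>u. 1 + a * t)"
  by (induction u) (simp_all add: EP_Cons algebra_simps del: mult_pCons_left)

lemma EP_nz: "EP (u :: 'a::idom list) \<noteq> 0"
  by (induction u) (simp_all add: EP_Cons del: mult_pCons_left)

lemma degree_EP_le: "degree (EP (u :: 'a::idom list)) \<le> length u"
proof (induction u)
  case (Cons a u)
  have "degree (EP (a # u)) \<le> degree [:1, a:] + degree (EP u)"
    unfolding EP_Cons by (rule degree_mult_le)
  also have "\<dots> \<le> 1 + length u" using Cons by simp
  finally show ?case by simp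
qed simp

lemma degree_EP_eq: "(\<forall>a\<in>set u. a \<noteq> 0) \<Longrightarrow> degree (EP (u :: 'a::idom list)) = length u"
proof (induction u)
  case (Cons a u)
  have "degree (EP (a # u)) = degree [:1, a:] + degree (EP u)"
    unfolding EP_Cons by (rule degree_mult_eq) (simp_all add: EP_nz)
  then show ?case using Cons by simp
qed simp

lemma EP_remove:
  assumes "y \<in> set u"
  obtains u' where "EP u = [:1, y:] * EP u'" "mset u = add_mset y (mset u')" "length u' = length u - 1"
proof -
  from split_list[OF assms] obtain u1 u2 where u: "u = u1 @ y # u2" by blast
  have "EP u = [:1, y:] * EP (u1 @ u2)" by (simp add: u EP_def algebra_simps del: mult_pCons_left)
  moreover have "mset u = add_mset y (mset (u1 @ u2))" by (simp add: u)
  moreover have "length (u1 @ u2) = length u - 1" by (simp add: u)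
  ultimately show ?thesis using that by blast
qed

lemma core:
  fixes v :: "'a::field list"
  shows "EP u = G * EP v \<Longrightarrow> degree G + length v \<le> length u \<Longrightarrow> mset v \<subseteq># mset u"
proof (induction v arbitrary: u G)
  case Nil then show ?case by simp
next
  case (Cons y v)
  have eq: "EP u = (G * [:1, y:]) * EP v" using Cons(2) by (simp add: EP_Cons algebra_simps del: mult_pCons_left)
  show ?case
  proof (cases "y = 0")
    case False
    have "poly (EP u) (- 1 / y) = 0" using False by (simp add: eq)
    then have "(\<Prod>a\<leftarrow>u. 1 + a * (- 1 / y)) = 0" by (simp add: poly_EP)
    then obtain a where a: "a \<in> set u" "1 + a * (- 1 / y) = 0"
      by (auto simp: prod_list_zero_iff)
    then have "a = y" using False by (simp add: field_simps)
    with a obtain u' where u': "EP u = [:1, y:] * EP u'" "mset u = add_mset y (mset u')" "length u' = length u - 1"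
      using EP_remove by metis
    have "[:1, y:] * EP u' = [:1, y:] * (G * EP v)" using u'(1) eq by (simp add: algebra_simps del: mult_pCons_left)
    moreover have "[:1, y:] \<noteq> 0" by simp
    ultimately have "EP u' = G * EP v" using mult_left_cancel by blast
    from Cons.IH[OF this] Cons(3) u'(3) have "mset v \<subseteq># mset u'" by simp
    then show ?thesis using u'(2) by simp
  next
    case True
    then have eq': "EP u = G * EP v" using eq by simp
    have "0 \<in> set u"
    proof (rule ccontr)
      assume "0 \<notin> set u"
      then have "degree (EP u) = length u" by (intro degree_EP_eq) auto
      moreover have "degree (G * EP v) \<le> degree G + length v"
        using degree_mult_le[of G "EP v"] degree_EP_le[of v] by simp
      ultimately show False using eq' Cons(3) by simp
    qed
    then obtain u' where u': "EP u = [:1, 0:] * EP u'" "mset u = add_mset 0 (mset u')" "length u' = length u - 1"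
      using EP_remove by metis
    have "EP u' = G * EP v" using u'(1) eq' by (simp add: one_pCons[symmetric])
    from Cons.IH[OF this] Cons(3) u'(3) have "mset v \<subseteq># mset u'" by simp
    then show ?thesis using u'(2) True by simp
  qed
qed

lemma Sf_converse:
  fixes u v :: "'a::field list"
  assumes len: "length v \<le> length u"
    and z: "\<And>r. r > length u - length v \<Longrightarrow> Sf r u v = 0"
  shows "mset v \<subseteq># mset u"
proof -
  define L where "L = length u - length v"
  define F where "F = HF v * EF u"
  define G where "G = (\<Sum>i\<le>L. monom (F $ i) i)"
  have cG: "coeff G n = (if n \<le> L then F $ n else 0)" for n
    by (simp add: G_def coeff_sum coeff_monom)
  have "fps_of_poly G = F"
  proof (rule fps_ext)
    fix n show "fps_of_poly G $ n = F $ n"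
      using z[of n] Sf_nth[of v u n] by (auto simp: cG F_def L_def fps_of_poly_nth)
  qed
  moreover have "F * EF v = EF u"
    by (metis F_def HF_EF mult.commute mult.left_commute mult_1_right)
  ultimately have "fps_of_poly (EP u) = fps_of_poly (G * EP v)"
    by (simp add: fps_EP fps_of_poly_mult)
  then have "EP u = G * EP v" by (simp only: fps_of_poly_eq_iff)
  moreover have "degree G \<le> L" by (rule degree_le) (simp add: cG)
  ultimately show ?thesis using core[of u G v] len by (simp add: L_def)
qed


definition hv :: "nat \<Rightarrow> rat poly \<Rightarrow> mpoly" where
  "hv v p = poly (map_poly Const p) (Var v)"

lemma mapC_add: "map_poly Const (p + q) = map_poly Const p + map_poly Const q"
  by (rule poly_eqI) (simp add: coeff_map_poly Const_add)

lemma mapC_mult: "map_poly Const (p * q) = map_poly Const p * map_poly Const q"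
  by (rule poly_eqI) (simp add: coeff_map_poly coeff_mult Const_sum Const_mult)

lemma hv_add: "hv v (p + q) = hv v p + hv v q"
  by (simp add: hv_def mapC_add)

lemma hv_mult: "hv v (p * q) = hv v p * hv v q"
  by (simp add: hv_def mapC_mult)

lemma hv_const: "hv v [:c:] = Const c"
  by (simp add: hv_def map_poly_pCons)

lemma hv_one: "hv v 1 = 1"
  using hv_const[of v 1] by (simp add: one_pCons)

lemma hv_lin: "hv v [:- c, 1:] = Var v - Const c"
  by (simp add: hv_def Const_uminus map_poly_pCons)

lemma hv_smult: "hv v (smult c p) = Const c * hv v p"
  using hv_mult[of v "[:c:]" p] by (simp add: hv_const)

lemma hv_prod: "hv v (\<Prod>i\<in>S. f i) = (\<Prod>i\<in>S. hv v (f i))"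
  by (induction S rule: infinite_finite_induct) (auto simp: hv_mult hv_one)

lemma hv_sum: "hv v (\<Sum>i\<in>S. f i) = (\<Sum>i\<in>S. hv v (f i))"
proof (induction S rule: infinite_finite_induct)
  case (insert x F) then show ?case by (simp add: hv_add)
qed (simp_all add: hv_def)

lemma hv_polyring: "v < N \<Longrightarrow> hv v p \<in> polyring N"
  unfolding hv_def poly_altdef
  by (intro polyring_sum polyring_mult polyring_power polyring_Var)
     (auto simp: coeff_map_poly)

section \<open>Lagrange interpolation\<close>

definition lag :: "rat set \<Rightarrow> rat \<Rightarrow> rat poly" where
  "lag A c = smult (inverse (\<Prod>c'\<in>A - {c}. c - c')) (\<Prod>c'\<in>A - {c}. [:- c', 1:])"

lemma poly_lag:
  assumes "finite A" "c \<in> A" "x \<in> A"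
  shows "poly (lag A c) x = (if x = c then 1 else 0)"
proof (cases "x = c")
  case True
  have "(\<Prod>c'\<in>A - {c}. c - c') \<noteq> 0" using assms by (simp add: prod_zero_iff)
  then show ?thesis using True by (simp add: lag_def poly_prod)
next
  case False
  then have "x \<in> A - {c}" using assms by auto
  then have "(\<Prod>c'\<in>A - {c}. x - c') = 0" using assms by (auto simp: prod_zero_iff)
  then show ?thesis using False by (simp add: lag_def poly_prod)
qed

lemma degree_lag: "finite A \<Longrightarrow> degree (lag A c) \<le> card (A - {c})"
proof -
  assume f: "finite A"
  have "degree (lag A c) \<le> degree (\<Prod>c'\<in>A - {c}. [:- c', 1:])"
    unfolding lag_def by (rule degree_smult_le)
  also have "\<dots> \<le> sum (degree \<circ> (\<lambda>c'. [:- c', 1:])) (A - {c})"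
    by (rule degree_prod_sum_le) (use f in simp)
  also have "\<dots> = card (A - {c})" by simp
  finally show ?thesis .
qed

lemma lag_sum:
  assumes "finite A" "A \<noteq> {}"
  shows "(\<Sum>c\<in>A. lag A c) = 1"
proof (rule ccontr)
  assume ne: "(\<Sum>c\<in>A. lag A c) \<noteq> 1"
  define q where "q = (\<Sum>c\<in>A. lag A c) - 1"
  have qne: "q \<noteq> 0" using ne by (simp add: q_def)
  have cA: "card A \<ge> 1" using assms by (simp add: Suc_le_eq card_gt_0_iff)
  have "degree (\<Sum>c\<in>A. lag A c) \<le> card A - 1"
  proof (rule degree_sum_le[OF assms(1)])
    fix c assume "c \<in> A"
    then show "degree (lag A c) \<le> card A - 1"
      using degree_lag[OF assms(1), of c] assms(1) by simp
  qed
  then have dq: "degree q \<le> card A - 1"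
    unfolding q_def using degree_diff_le[of "\<Sum>c\<in>A. lag A c" "card A - 1" 1] by simp
  have roots: "A \<subseteq> {x. poly q x = 0}"
  proof
    fix x assume x: "x \<in> A"
    have "poly (\<Sum>c\<in>A. lag A c) x = (\<Sum>c\<in>A. if x = c then 1 else 0)"
      by (simp add: poly_sum poly_lag[OF assms(1) _ x])
    also have "\<dots> = 1" using x assms(1) by simp
    finally show "x \<in> {x. poly q x = 0}" by (simp add: q_def)
  qed
  have "card A \<le> card {x. poly q x = 0}"
    by (rule card_mono[OF poly_roots_finite[OF qne] roots])
  also have "\<dots> \<le> degree q" by (rule card_poly_roots_bound[OF qne])
  finally show False using dq cA by simp
qed

lemma lag_mul:
  assumes "finite A" "c \<in> A"
  shows "lag A c * [:- c, 1:] = smult (inverse (\<Prod>c'\<in>A - {c}. c - c')) (\<Prod>c'\<in>A. [:- c', 1:])"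
proof -
  have "(\<Prod>c'\<in>A. [:- c', 1:]) = [:- c, 1:] * (\<Prod>c'\<in>A - {c}. [:- c', 1:])"
    using assms by (simp add: prod.remove)
  have "lag A c * [:- c, 1:] = smult (inverse (\<Prod>c'\<in>A - {c}. c - c')) ((\<Prod>c'\<in>A - {c}. [:- c', 1:]) * [:- c, 1:])"
    by (simp only: lag_def mult_smult_left)
  also have "\<dots> = smult (inverse (\<Prod>c'\<in>A - {c}. c - c')) (\<Prod>c'\<in>A. [:- c', 1:])"
    using \<open>(\<Prod>c'\<in>A. [:- c', 1:]) = [:- c, 1:] * (\<Prod>c'\<in>A - {c}. [:- c', 1:])\<close> by (simp only: mult.commute)
  finally show ?thesis .
qed

definition fA :: "nat \<Rightarrow> rat set \<Rightarrow> mpoly" where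
  "fA v A = (\<Prod>c\<in>A. Var v - Const c)"

definition Lv :: "nat \<Rightarrow> rat set \<Rightarrow> rat \<Rightarrow> mpoly" where
  "Lv v A c = hv v (lag A c)"

lemma Lv_sum: "finite A \<Longrightarrow> A \<noteq> {} \<Longrightarrow> (\<Sum>c\<in>A. Lv v A c) = 1"
  unfolding Lv_def hv_sum[symmetric] by (simp add: lag_sum hv_one)

lemma Lv_mul:
  assumes "finite A" "c \<in> A"
  shows "Lv v A c * (Var v - Const c) = Const (inverse (\<Prod>c'\<in>A - {c}. c - c')) * fA v A"
proof -
  have "Lv v A c * (Var v - Const c) = hv v (lag A c * [:- c, 1:])"
    by (simp only: Lv_def hv_mult hv_lin)
  also have "\<dots> = Const (inverse (\<Prod>c'\<in>A - {c}. c - c')) * fA v A"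
    by (simp only: lag_mul[OF assms] hv_smult hv_prod hv_lin fA_def)
  finally show ?thesis .
qed

lemma Lv_polyring: "v < N \<Longrightarrow> Lv v A c \<in> polyring N"
  by (simp add: Lv_def hv_polyring)



lemma vs_add: "vars p \<subseteq> V \<Longrightarrow> vars q \<subseteq> V \<Longrightarrow> vars (p + q) \<subseteq> V"
  using vars_add[of p q] by blast
lemma vs_mult: "vars p \<subseteq> V \<Longrightarrow> vars q \<subseteq> V \<Longrightarrow> vars (p * q) \<subseteq> V"
  using vars_mult[of p q] by blast
lemma vs_sum: "(\<And>i. i \<in> S \<Longrightarrow> vars (f i) \<subseteq> V) \<Longrightarrow> vars (\<Sum>i\<in>S. f i) \<subseteq> V"
proof (induction S rule: infinite_finite_induct)
  case (insert x F) then show ?case by (simp add: vs_add)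
qed simp_all
lemma vs_prod: "(\<And>i. i \<in> S \<Longrightarrow> vars (f i) \<subseteq> V) \<Longrightarrow> vars (\<Prod>i\<in>S. f i) \<subseteq> V"
proof (induction S rule: infinite_finite_induct)
  case (insert x F) then show ?case by (simp add: vs_mult)
qed simp_all
lemma vs_power: "vars p \<subseteq> V \<Longrightarrow> vars (p ^ e) \<subseteq> V"
  by (induction e) (simp_all add: vs_mult)
lemma vs_esym:
  assumes "\<And>x. x \<in> set l \<Longrightarrow> vars x \<subseteq> V" shows "vars (esym r l) \<subseteq> V"
  unfolding esym_def
proof (intro vs_sum vs_prod)
  fix S i assume "S \<in> {S. S \<subseteq> {..<length l} \<and> card S = r}" "i \<in> S"
  then have "i < length l" by auto
  then show "vars (l ! i) \<subseteq> V" using assms nth_mem by blast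
qed
lemma vs_hsym:
  assumes "\<And>x. x \<in> set l \<Longrightarrow> vars x \<subseteq> V" shows "vars (hsym r l) \<subseteq> V"
  unfolding hsym_def
proof (intro vs_sum vs_prod vs_power)
  fix f i assume "i \<in> {..<length l}"
  then have "i < length l" by auto
  then show "vars (l ! i) \<subseteq> V" using assms nth_mem by blast
qed
lemma vs_Sf: "(\<And>x. x \<in> set l \<Longrightarrow> vars x \<subseteq> V) \<Longrightarrow> (\<And>x. x \<in> set m \<Longrightarrow> vars x \<subseteq> V) \<Longrightarrow> vars (Sf r l m) \<subseteq> V"
  unfolding Sf_def by (intro vs_sum vs_mult vs_power vs_esym vs_hsym) auto

lemma eval_esym: "eval (esym r l) z = esym r (map (\<lambda>p. eval p z) l)"
  unfolding esym_def eval_sum eval_prod length_map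
  by (intro sum.cong refl prod.cong) auto

lemma eval_hsym: "eval (hsym r l) z = hsym r (map (\<lambda>p. eval p z) l)"
  unfolding hsym_def eval_sum eval_prod eval_power length_map
  by (intro sum.cong refl prod.cong) auto

lemma eval_Sf: "eval (Sf r l m) z = Sf r (map (\<lambda>p. eval p z) l) (map (\<lambda>p. eval p z) m)"
  unfolding Sf_def by (simp add: eval_sum eval_mult eval_power eval_uminus eval_esym eval_hsym)

lemma distinct_sub_mset: "distinct v \<Longrightarrow> set v \<subseteq> set u \<Longrightarrow> mset v \<subseteq># mset u"
proof -
  assume d: "distinct v" and s: "set v \<subseteq> set u"
  show ?thesis
  proof (rule mset_subset_eqI)
    fix x show "count (mset v) x \<le> count (mset u) x"
    proof (cases "x \<in> set v")
      case True
      then have 1: "count (mset v) x = 1" using d by (simp add: distinct_count_atmost_1)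
      have "x \<in> set u" using True s by blast
      then have "count (mset u) x \<noteq> 0" by simp
      then show ?thesis using 1 by linarith
    next
      case False then have "count (mset v) x = 0" by simp
      then show ?thesis by linarith
    qed
  qed
qed

lemma sub_mset_distinct: "mset v \<subseteq># mset u \<Longrightarrow> distinct u \<Longrightarrow> distinct v"
proof -
  assume s: "mset v \<subseteq># mset u" and d: "distinct u"
  have c: "count (mset v) x \<le> 1" for x
  proof -
    have "count (mset u) x = (if x \<in> set u then 1 else 0)" using d by (simp add: distinct_count_atmost_1)
    then have "count (mset u) x \<le> 1" by simp
    then show ?thesis using mset_subset_eq_count[OF s, of x] by linarith
  qed
  show ?thesis unfolding distinct_count_atmost_1
  proof
    fix a show "count (mset v) a = (if a \<in> set v then 1 else 0)"
    proof (cases "a \<in> set v")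
      case True
      then have "count (mset v) a \<noteq> 0" by simp
      then have "count (mset v) a = 1" using c[of a] by linarith
      then show ?thesis using True by simp
    next
      case False then show ?thesis by simp
    qed
  qed
qed

lemma ig_cancel_const:
  "c \<noteq> 0 \<Longrightarrow> Const c * E \<in> ideal_gen N G \<Longrightarrow> E \<in> ideal_gen N G"
proof -
  assume c: "c \<noteq> 0" and h: "Const c * E \<in> ideal_gen N G"
  have "Const (inverse c) * (Const c * E) \<in> ideal_gen N G" using h by (rule ig_mult[OF polyring_Const])
  then show ?thesis using c by (simp add: mult.assoc[symmetric] Const_mult[symmetric])
qed

lemma telescope:
  assumes "finite S"
    and "\<And>j. j \<in> S \<Longrightarrow> E * w j \<in> ideal_gen N G"
    and "\<And>j. j \<in> S \<Longrightarrow> u j \<in> polyring N" "\<And>j. j \<in> S \<Longrightarrow> w j \<in> polyring N"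
  shows "E * ((\<Prod>j\<in>S. u j + w j) - (\<Prod>j\<in>S. u j)) \<in> ideal_gen N G"
  using assms
proof (induction S rule: finite_induct)
  case empty then show ?case by simp
next
  case (insert s S)
  have eq: "E * ((\<Prod>j\<in>insert s S. u j + w j) - (\<Prod>j\<in>insert s S. u j)) =
      u s * (E * ((\<Prod>j\<in>S. u j + w j) - (\<Prod>j\<in>S. u j))) + (E * w s) * (\<Prod>j\<in>S. u j + w j)"
    using insert(1,2) by (simp add: algebra_simps)
  have IH: "E * ((\<Prod>j\<in>S. u j + w j) - (\<Prod>j\<in>S. u j)) \<in> ideal_gen N G"
    using insert by auto
  have "u s * (E * ((\<Prod>j\<in>S. u j + w j) - (\<Prod>j\<in>S. u j))) \<in> ideal_gen N G"
    by (rule ig_mult[OF _ IH]) (use insert in auto)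
  moreover have "(E * w s) * (\<Prod>j\<in>S. u j + w j) \<in> ideal_gen N G"
    by (rule ig_mult_right) (use insert in \<open>auto intro!: polyring_prod polyring_add\<close>)
  ultimately show ?case unfolding eq by (rule ig_add)
qed



lemma length_ys[simp]: "length (ys n d) = d" by (simp add: ys_def)
lemma nth_ys[simp]: "j < d \<Longrightarrow> ys n d ! j = Var (n + j)" by (simp add: ys_def)
lemma length_xs[simp]: "length (xs n) = n" by (simp add: xs_def)
lemma nth_xs[simp]: "i < n \<Longrightarrow> xs n ! i = Var i" by (simp add: xs_def)

lemma set_ys_poly: "x \<in> set (ys n d) \<Longrightarrow> x \<in> polyring (n + d)"
  by (auto simp: ys_def intro!: polyring_Var)
lemma set_xs_poly: "x \<in> set (xs n) \<Longrightarrow> x \<in> polyring (n + d)"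
  by (auto simp: xs_def intro!: polyring_Var)
lemma set_Const_poly: "x \<in> set (map Const \<alpha>) \<Longrightarrow> x \<in> polyring N"
  by auto

lemma Sf_poly: "(\<And>x. x \<in> set l \<Longrightarrow> x \<in> polyring N) \<Longrightarrow> (\<And>x. x \<in> set m \<Longrightarrow> x \<in> polyring N) \<Longrightarrow> Sf r l m \<in> polyring N"
  unfolding Sf_def by (intro polyring_sum polyring_mult polyring_esym polyring_hsym) auto

lemma gen3_eq: "(\<Sum>j\<le>d. (-1)^j * Var i ^ (d-j) * esym j (ys n d)) = (\<Prod>j<d. Var i - Var (n + j))"
  using id3[where m = "ys n d" and w = "Var i"] by simp

lemma gens_eq: "gens n k d \<alpha> =
     {Sf r (map Const \<alpha>) (ys n d) | r. r > k - d}
   \<union> {Sf r (xs n) (ys n d) | r. r > n - d}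
   \<union> {(\<Prod>j<d. Var i - Var (n + j)) | i. i < n}"
  unfolding gens_def Sf_def gen3_eq by (rule refl)

lemma gens_poly: "gens n k d \<alpha> \<subseteq> polyring (n + d)"
proof -
  have "(\<Prod>j<d. Var i - Var (n + j)) \<in> polyring (n + d)" if "i < n" for i
    using that by (intro polyring_prod polyring_diff polyring_Var) auto
  then show ?thesis unfolding gens_eq
    by (auto intro!: Sf_poly dest: set_ys_poly set_xs_poly)
qed

lemma map_eval_Const: "map (\<lambda>p. eval p z) (map Const \<alpha>) = \<alpha>"
  by (induction \<alpha>) auto

lemma map_eval_ys: "map (\<lambda>p. eval p z) (ys n d) = map (\<lambda>j. z (n + j)) [0..<d]"
  by (rule nth_equalityI) auto

lemma map_eval_xs: "map (\<lambda>p. eval p z) (xs n) = map z [0..<n]"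
  by (rule nth_equalityI) auto

section \<open>Easy inclusion\<close>

lemma gens_vanish:
  assumes "k \<le> n" "d \<le> k" "length \<alpha> = k" "distinct \<alpha>"
    and g: "g \<in> gens n k d \<alpha>" and z: "z \<in> Zset n d \<alpha>"
  shows "eval g z = 0"
proof -
  let ?v = "map (\<lambda>j. z (n + j)) [0..<d]"
  have zA: "\<And>i. i < n + d \<Longrightarrow> z i \<in> set \<alpha>" and inj: "inj_on z {n..<n+d}"
    and im: "z ` {..<n} = z ` {n..<n+d}"
    using z by (auto simp: Zset_def)
  have dv: "distinct ?v"
  proof -
    have "inj_on (\<lambda>j. z (n + j)) {0..<d}"
    proof (rule inj_onI)
      fix x y assume "x \<in> {0..<d}" "y \<in> {0..<d}" "z (n + x) = z (n + y)"
      then have "n + x = n + y" using inj_onD[OF inj, of "n + x" "n + y"] by auto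
      then show "x = y" by simp
    qed
    then show ?thesis by (simp add: distinct_map)
  qed
  have sv: "set ?v = z ` {n..<n+d}"
  proof
    show "set ?v \<subseteq> z ` {n..<n + d}" by auto
    show "z ` {n..<n + d} \<subseteq> set ?v"
    proof
      fix y assume "y \<in> z ` {n..<n + d}"
      then obtain i where i: "i \<in> {n..<n+d}" "y = z i" by blast
      then have "i - n < d" "y = z (n + (i - n))" by auto
      then show "y \<in> set ?v" by force
    qed
  qed
  from g show ?thesis unfolding gens_eq
  proof (elim UnE CollectE exE conjE)
    fix r assume gr: "g = Sf r (map Const \<alpha>) (ys n d)" and r: "k - d < r"
    have "set ?v \<subseteq> set \<alpha>" using sv zA by auto
    then have "mset ?v \<subseteq># mset \<alpha>" by (rule distinct_sub_mset[OF dv])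
    then have "Sf r \<alpha> ?v = 0" using r assms by (intro Sf_forward) auto
    then show ?thesis by (simp add: gr eval_Sf map_eval_ys comp_def)
  next
    fix r assume gr: "g = Sf r (xs n) (ys n d)" and r: "n - d < r"
    have "set (map z [0..<n]) = z ` {..<n}" by (simp add: atLeast0LessThan)
    then have "set ?v \<subseteq> set (map z [0..<n])" using sv im by simp
    then have "mset ?v \<subseteq># mset (map z [0..<n])" by (rule distinct_sub_mset[OF dv])
    then have "Sf r (map z [0..<n]) ?v = 0" using r assms by (intro Sf_forward) auto
    then show ?thesis by (simp add: gr eval_Sf map_eval_xs map_eval_ys)
  next
    fix i assume gr: "g = (\<Prod>j<d. Var i - Var (n + j))" and i: "i < n"
    have "z i \<in> z ` {n..<n+d}" using im i by auto
    then obtain i' where i': "i' \<in> {n..<n+d}" "z i = z i'" by blast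
    define j where "j = i' - n"
    have j: "j < d" "z i = z (n + j)" using i' by (auto simp: j_def)
    have "eval g z = (\<Prod>j<d. z i - z (n + j))" by (simp add: gr eval_prod eval_diff)
    also have "\<dots> = 0" by (rule prod_zero) (use j in auto)
    finally show ?thesis .
  qed
qed

lemma easy_incl:
  assumes "k \<le> n" "d \<le> k" "length \<alpha> = k" "distinct \<alpha>"
  shows "ideal_gen (n+d) (gens n k d \<alpha>) \<subseteq> vanishing_ideal (n+d) (Zset n d \<alpha>)"
proof
  fix p assume p: "p \<in> ideal_gen (n+d) (gens n k d \<alpha>)"
  then have pp: "p \<in> polyring (n + d)" using ig_subset_polyring[OF gens_poly] by blast
  from p obtain F c where F: "finite F" "F \<subseteq> gens n k d \<alpha>" "p = (\<Sum>g\<in>F. c g * g)"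
    unfolding ideal_gen_def by blast
  have "eval p z = 0" if "z \<in> Zset n d \<alpha>" for z
  proof -
    have "eval p z = (\<Sum>g\<in>F. eval (c g) z * eval g z)" by (simp add: F(3) eval_sum eval_mult)
    also have "\<dots> = 0"
    proof (rule sum.neutral, rule ballI)
      fix g assume "g \<in> F"
      then have "g \<in> gens n k d \<alpha>" using F(2) by blast
      then show "eval (c g) z * eval g z = 0" using gens_vanish[OF assms _ that] by simp
    qed
    finally show ?thesis .
  qed
  then show "p \<in> vanishing_ideal (n+d) (Zset n d \<alpha>)" using pp by (simp add: vanishing_ideal_def)
qed



lemma prod_set_nth:
  assumes "distinct \<alpha>"
  shows "(\<Prod>c\<in>set \<alpha>. f c) = (\<Prod>i<length \<alpha>. f (\<alpha> ! i))"
proof -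
  have "set \<alpha> = (\<lambda>i. \<alpha> ! i) ` {..<length \<alpha>}" by (auto simp: set_conv_nth)
  moreover have "inj_on (\<lambda>i. \<alpha> ! i) {..<length \<alpha>}" by (rule inj_on_nth) (use assms in auto)
  ultimately show ?thesis by (simp add: prod.reindex)
qed

lemma fA_in:
  assumes dk: "d \<le> k" and d1: "1 \<le> d" and len: "length \<alpha> = k" and dist: "distinct \<alpha>" and j: "j < d"
  shows "fA (n + j) (set \<alpha>) \<in> ideal_gen (n + d) (gens n k d \<alpha>)"
proof -
  let ?I = "ideal_gen (n + d) (gens n k d \<alpha>)"
  let ?l = "map Const \<alpha>"
  let ?m = "ys n d"
  let ?y = "Var (n + j)"
  define rest where "rest = take j ?m @ drop (Suc j) ?m"
  have msplit: "?m = take j ?m @ ?y # drop (Suc j) ?m"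
    using id_take_nth_drop[of j ?m] j by simp
  have lrest: "length rest = d - 1" using j by (simp add: rest_def)
  have HFm: "HF ?m = geo ?y * HF rest"
    by (subst msplit) (simp add: rest_def HF_append HF_Cons algebra_simps)
  have key: "EF ?l * geo ?y = (HF ?m * EF ?l) * EF rest"
  proof -
    have "(HF ?m * EF ?l) * EF rest = (geo ?y * EF ?l) * (HF rest * EF rest)"
      by (simp add: HFm algebra_simps)
    also have "\<dots> = geo ?y * EF ?l" by (simp only: HF_EF mult_1_right)
    finally show ?thesis by (metis mult.commute)
  qed
  have "(EF ?l * geo ?y) $ k = (\<Prod>i<k. Const (\<alpha> ! i) - ?y)"
    using EF_geo_nth[of ?l ?y] len by simp
  also have "(EF ?l * geo ?y) $ k = ((HF ?m * EF ?l) * EF rest) $ k" by (simp only: key)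
  also have "\<dots> = (\<Sum>i=0..k. (HF ?m * EF ?l) $ i * EF rest $ (k - i))" by (rule fps_mult_nth)
  also have "\<dots> = (\<Sum>i=0..k. Sf i ?l ?m * esym (k - i) rest)" by (simp only: Sf_nth EF_nth)
  finally have P: "(\<Prod>i<k. Const (\<alpha> ! i) - ?y) = (\<Sum>i=0..k. Sf i ?l ?m * esym (k - i) rest)" by (rule sym)
  have restp: "x \<in> polyring (n + d)" if "x \<in> set rest" for x
  proof -
    have "x \<in> set (take j ?m) \<or> x \<in> set (drop (Suc j) ?m)" using that by (simp add: rest_def)
    then have "x \<in> set ?m" using in_set_takeD in_set_dropD by metis
    then show ?thesis by (rule set_ys_poly)
  qed
  have sumin: "(\<Sum>i=0..k. Sf i ?l ?m * esym (k - i) rest) \<in> ?I"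
  proof (rule ig_sum)
    fix i assume "i \<in> {0..k}"
    show "Sf i ?l ?m * esym (k - i) rest \<in> ?I"
    proof (cases "k - i > d - 1")
      case True
      then have "esym (k - i) rest = 0" using lrest by (intro esym_big) simp
      then show ?thesis by simp
    next
      case False
      then have "i > k - d" using d1 dk \<open>i \<in> {0..k}\<close> by auto
      then have "Sf i ?l ?m \<in> gens n k d \<alpha>" unfolding gens_eq by blast
      then have Sfin: "Sf i ?l ?m \<in> ?I" by (rule ig_gen)
      have "esym (k - i) rest \<in> polyring (n + d)" by (rule polyring_esym) (rule restp)
      then show ?thesis by (rule ig_mult_right[OF _ Sfin])
    qed
  qed
  have Pin: "(\<Prod>i<k. Const (\<alpha> ! i) - ?y) \<in> ?I" by (subst P) (rule sumin)
  have "fA (n + j) (set \<alpha>) = (\<Prod>i<k. ?y - Const (\<alpha> ! i))"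
    unfolding fA_def prod_set_nth[OF dist] len ..
  also have "\<dots> = (\<Prod>i<k. - (Const (\<alpha> ! i) - ?y))" by simp
  also have "\<dots> = (-1) ^ k * (\<Prod>i<k. Const (\<alpha> ! i) - ?y)"
    by (subst prod_neg) simp_all
  moreover have "(-1) ^ k * (\<Prod>i<k. Const (\<alpha> ! i) - ?y) \<in> ?I"
    by (rule ig_mult[OF polyring_neg_one_power Pin])
  ultimately show ?thesis by simp
qed


definition Eyy :: "nat \<Rightarrow> nat \<Rightarrow> rat set \<Rightarrow> (nat \<Rightarrow> rat) \<Rightarrow> mpoly" where
  "Eyy n d A b = (\<Prod>j<d. Lv (n + j) A (b j))"

definition Exx :: "nat \<Rightarrow> rat set \<Rightarrow> (nat \<Rightarrow> rat) \<Rightarrow> mpoly" where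
  "Exx n B a = (\<Prod>i<n. Lv i B (a i))"

definition pt :: "nat \<Rightarrow> nat \<Rightarrow> (nat \<Rightarrow> rat) \<Rightarrow> (nat \<Rightarrow> rat) \<Rightarrow> nat \<Rightarrow> rat" where
  "pt n d a b i = (if i < n then a i else if i < n + d then b (i - n) else 0)"

lemma Ey_poly: "Eyy n d A b \<in> polyring (n + d)"
  unfolding Eyy_def by (intro polyring_prod Lv_polyring) auto

lemma Ex_poly: "Exx n B a \<in> polyring (n + d)"
  unfolding Exx_def by (intro polyring_prod Lv_polyring) auto

lemma Ey_sum:
  assumes "finite A" "A \<noteq> {}"
  shows "(\<Sum>b\<in>PiE {..<d} (\<lambda>_. A). Eyy n d A b) = 1"
proof -
  have "(\<Sum>b\<in>PiE {..<d} (\<lambda>_. A). Eyy n d A b) = (\<Prod>j<d. \<Sum>c\<in>A. Lv (n + j) A c)"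
    unfolding Eyy_def by (rule prod_sum_PiE[symmetric]) (use assms in auto)
  also have "\<dots> = 1" using assms by (simp add: Lv_sum)
  finally show ?thesis .
qed

lemma Ex_sum:
  assumes "finite B" "B \<noteq> {}"
  shows "(\<Sum>a\<in>PiE {..<n} (\<lambda>_. B). Exx n B a) = 1"
proof -
  have "(\<Sum>a\<in>PiE {..<n} (\<lambda>_. B). Exx n B a) = (\<Prod>i<n. \<Sum>c\<in>B. Lv i B c)"
    unfolding Exx_def by (rule prod_sum_PiE[symmetric]) (use assms in auto)
  also have "\<dots> = 1" using assms by (simp add: Lv_sum)
  finally show ?thesis .
qed

lemma kill_lemma:
  assumes "E \<in> polyring N" "g \<in> ideal_gen N G" "E * g - Const c * E \<in> ideal_gen N G" "c \<noteq> 0"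
  shows "E \<in> ideal_gen N G"
proof -
  have "E * g \<in> ideal_gen N G" by (rule ig_mult[OF assms(1,2)])
  then have "E * g - (E * g - Const c * E) \<in> ideal_gen N G" using assms(3) by (rule ig_diff)
  then have "Const c * E \<in> ideal_gen N G" by simp
  then show ?thesis using assms(4) ig_cancel_const by blast
qed

lemma map_pt_y: "map (\<lambda>j. pt n d a b (n + j)) [0..<d] = map b [0..<d]"
  by (rule map_cong) (auto simp: pt_def)

lemma map_pt_x: "map (pt n d a b) [0..<n] = map a [0..<n]"
  by (rule map_cong) (auto simp: pt_def)

lemma vars_gen1: "vars (Sf r (map Const \<alpha>) (ys n d)) \<subseteq> {n..<n+d}"
proof (rule vs_Sf)
  fix x assume "x \<in> set (map Const \<alpha>)" then show "vars x \<subseteq> {n..<n+d}" by auto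
next
  fix x assume "x \<in> set (ys n d)"
  then obtain i where "i \<in> {n..<n+d}" "x = Var i" by (auto simp: ys_def)
  then show "vars x \<subseteq> {n..<n+d}" using vars_Var[of i] by auto
qed

context
  fixes n k d :: nat and \<alpha> :: "rat list"
  assumes d1: "1 \<le> d" and dk: "d \<le> k" and kn: "k \<le> n"
    and len: "length \<alpha> = k" and dist: "distinct \<alpha>"
begin

lemma Ey_lin:
  assumes b: "b \<in> PiE {..<d} (\<lambda>_. set \<alpha>)" and j: "j < d"
  shows "Eyy n d (set \<alpha>) b * (Var (n + j) - Const (b j)) \<in> ideal_gen (n + d) (gens n k d \<alpha>)"
proof -
  let ?R = "\<Prod>j'\<in>{..<d} - {j}. Lv (n + j') (set \<alpha>) (b j')"
  have bj: "b j \<in> set \<alpha>" using b j by auto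
  have EyEq: "Eyy n d (set \<alpha>) b = Lv (n + j) (set \<alpha>) (b j) * ?R"
    unfolding Eyy_def using j by (simp add: prod.remove)
  have "Eyy n d (set \<alpha>) b * (Var (n + j) - Const (b j)) = ?R * (Lv (n + j) (set \<alpha>) (b j) * (Var (n + j) - Const (b j)))"
    by (simp only: EyEq ac_simps)
  also have "\<dots> = ?R * (Const (inverse (\<Prod>c'\<in>set \<alpha> - {b j}. b j - c')) * fA (n + j) (set \<alpha>))"
    by (simp only: Lv_mul[OF finite_set bj])
  also have "\<dots> = (?R * Const (inverse (\<Prod>c'\<in>set \<alpha> - {b j}. b j - c'))) * fA (n + j) (set \<alpha>)"
    by (simp only: mult.assoc)
  finally have "Eyy n d (set \<alpha>) b * (Var (n + j) - Const (b j)) =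
      (?R * Const (inverse (\<Prod>c'\<in>set \<alpha> - {b j}. b j - c'))) * fA (n + j) (set \<alpha>)" .
  also have "\<dots> \<in> ideal_gen (n + d) (gens n k d \<alpha>)"
  proof (rule ig_mult)
    show "?R * Const (inverse (\<Prod>c'\<in>set \<alpha> - {b j}. b j - c')) \<in> polyring (n + d)"
      by (intro polyring_mult polyring_prod Lv_polyring polyring_Const) auto
    show "fA (n + j) (set \<alpha>) \<in> ideal_gen (n + d) (gens n k d \<alpha>)"
      by (rule fA_in[OF dk d1 len dist j])
  qed
  finally show ?thesis .
qed

lemma nonin_witness:
  fixes b :: "nat \<Rightarrow> rat"
  assumes "\<not> inj_on b {..<d}"
  shows "\<exists>r > k - d. Sf r \<alpha> (map b [0..<d]) \<noteq> 0"
proof (rule ccontr)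
  assume "\<not> (\<exists>r > k - d. Sf r \<alpha> (map b [0..<d]) \<noteq> 0)"
  then have z: "\<And>r. r > length \<alpha> - length (map b [0..<d]) \<Longrightarrow> Sf r \<alpha> (map b [0..<d]) = 0"
    using len by auto
  have "length (map b [0..<d]) \<le> length \<alpha>" using dk len by simp
  from Sf_converse[OF this z] have "mset (map b [0..<d]) \<subseteq># mset \<alpha>" .
  then have "distinct (map b [0..<d])" using sub_mset_distinct dist by blast
  then have "inj_on b {0..<d}" by (simp add: distinct_map)
  then show False using assms by (simp add: atLeast0LessThan)
qed

lemma Ey_nonin:
  assumes b: "b \<in> PiE {..<d} (\<lambda>_. set \<alpha>)" and ni: "\<not> inj_on b {..<d}"
  shows "Eyy n d (set \<alpha>) b \<in> ideal_gen (n + d) (gens n k d \<alpha>)"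
proof -
  let ?I = "ideal_gen (n + d) (gens n k d \<alpha>)"
  obtain r where r: "r > k - d" "Sf r \<alpha> (map b [0..<d]) \<noteq> 0"
    using nonin_witness[OF ni] by blast
  let ?g = "Sf r (map Const \<alpha>) (ys n d)"
  let ?z = "pt n d (\<lambda>_. 0) b"
  have gG: "?g \<in> gens n k d \<alpha>" using r(1) unfolding gens_eq by blast
  then have gI: "?g \<in> ?I" by (rule ig_gen)
  have gp: "?g \<in> polyring (n + d)" using gG gens_poly by blast
  have ev: "eval ?g ?z = Sf r \<alpha> (map b [0..<d])"
    by (simp add: eval_Sf map_eval_ys comp_def map_pt_y)
  have "Eyy n d (set \<alpha>) b * ?g - Const (eval ?g ?z) * Eyy n d (set \<alpha>) b \<in> ?I"
  proof (rule subst_lemma[OF Ey_poly gp])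
    fix i assume "i \<in> vars ?g"
    then have i: "i \<in> {n..<n+d}" using vars_gen1 by blast
    define j where "j = i - n"
    have j: "j < d" "i = n + j" using i by (auto simp: j_def)
    have "?z i = b j" using j by (simp add: pt_def)
    then show "Eyy n d (set \<alpha>) b * (Var i - Const (?z i)) \<in> ?I"
      using Ey_lin[OF b j(1)] j(2) by simp
  qed
  then show ?thesis using kill_lemma[OF Ey_poly gI] ev r(2) by simp
qed

lemma Ey_fA:
  assumes b: "b \<in> PiE {..<d} (\<lambda>_. set \<alpha>)" and inj: "inj_on b {..<d}" and i: "i < n"
  shows "Eyy n d (set \<alpha>) b * fA i (b ` {..<d}) \<in> ideal_gen (n + d) (gens n k d \<alpha>)"
proof -
  let ?I = "ideal_gen (n + d) (gens n k d \<alpha>)"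
  let ?E = "Eyy n d (set \<alpha>) b"
  have g3: "(\<Prod>j<d. Var i - Var (n + j)) \<in> ?I"
    using i unfolding gens_eq by (intro ig_gen) blast
  have tel: "?E * ((\<Prod>j<d. (Var i - Const (b j)) + (Const (b j) - Var (n + j))) - (\<Prod>j<d. Var i - Const (b j))) \<in> ?I"
  proof (rule telescope)
    fix j assume j: "j \<in> {..<d}"
    have "- (?E * (Var (n + j) - Const (b j))) \<in> ?I"
      using Ey_lin[OF b] j by (intro ig_uminus) auto
    then show "?E * (Const (b j) - Var (n + j)) \<in> ?I" by (simp add: algebra_simps)
    show "Var i - Const (b j) \<in> polyring (n + d)" using i by (intro polyring_diff polyring_Var) auto
    show "Const (b j) - Var (n + j) \<in> polyring (n + d)" using j by (intro polyring_diff polyring_Var) auto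
  qed simp
  have "(\<Prod>j<d. (Var i - Const (b j)) + (Const (b j) - Var (n + j))) = (\<Prod>j<d. Var i - Var (n + j))"
    by simp
  then have tel': "?E * (\<Prod>j<d. Var i - Var (n + j)) - ?E * (\<Prod>j<d. Var i - Const (b j)) \<in> ?I"
    using tel by (simp add: right_diff_distrib)
  have "?E * (\<Prod>j<d. Var i - Var (n + j)) \<in> ?I" by (rule ig_mult[OF Ey_poly g3])
  then have "?E * (\<Prod>j<d. Var i - Var (n + j)) - (?E * (\<Prod>j<d. Var i - Var (n + j)) - ?E * (\<Prod>j<d. Var i - Const (b j))) \<in> ?I"
    using tel' by (rule ig_diff)
  then have "?E * (\<Prod>j<d. Var i - Const (b j)) \<in> ?I" by simp
  moreover have "fA i (b ` {..<d}) = (\<Prod>j<d. Var i - Const (b j))"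
    unfolding fA_def using inj by (simp add: prod.reindex)
  ultimately show ?thesis by simp
qed

lemma E_lin_x:
  assumes b: "b \<in> PiE {..<d} (\<lambda>_. set \<alpha>)" and inj: "inj_on b {..<d}"
    and a: "a \<in> PiE {..<n} (\<lambda>_. b ` {..<d})" and i: "i < n"
  shows "(Eyy n d (set \<alpha>) b * Exx n (b ` {..<d}) a) * (Var i - Const (a i)) \<in> ideal_gen (n + d) (gens n k d \<alpha>)"
proof -
  let ?B = "b ` {..<d}"
  let ?R = "\<Prod>i'\<in>{..<n} - {i}. Lv i' ?B (a i')"
  let ?E = "Eyy n d (set \<alpha>) b"
  let ?\<kappa> = "Const (inverse (\<Prod>c'\<in>?B - {a i}. a i - c'))"
  have ai: "a i \<in> ?B" using a i by auto
  have ExEq: "Exx n ?B a = Lv i ?B (a i) * ?R"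
    unfolding Exx_def using i by (simp add: prod.remove)
  have "(?E * Exx n ?B a) * (Var i - Const (a i)) = (?R * ?E) * (Lv i ?B (a i) * (Var i - Const (a i)))"
    by (simp only: ExEq ac_simps)
  also have "\<dots> = (?R * ?E) * (?\<kappa> * fA i ?B)"
    by (simp only: Lv_mul[OF finite_imageI[OF finite_lessThan] ai])
  also have "\<dots> = (?R * ?\<kappa>) * (?E * fA i ?B)"
    by (simp only: ac_simps)
  also have "\<dots> \<in> ideal_gen (n + d) (gens n k d \<alpha>)"
  proof (rule ig_mult)
    show "?R * ?\<kappa> \<in> polyring (n + d)"
      by (intro polyring_mult polyring_prod Lv_polyring polyring_Const) auto
    show "?E * fA i ?B \<in> ideal_gen (n + d) (gens n k d \<alpha>)" by (rule Ey_fA[OF b inj i])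
  qed
  finally show ?thesis .
qed

lemma E_subst:
  assumes b: "b \<in> PiE {..<d} (\<lambda>_. set \<alpha>)" and inj: "inj_on b {..<d}"
    and a: "a \<in> PiE {..<n} (\<lambda>_. b ` {..<d})" and p: "p \<in> polyring (n + d)"
  shows "(Eyy n d (set \<alpha>) b * Exx n (b ` {..<d}) a) * p - Const (eval p (pt n d a b)) * (Eyy n d (set \<alpha>) b * Exx n (b ` {..<d}) a)
     \<in> ideal_gen (n + d) (gens n k d \<alpha>)"
proof (rule subst_lemma[OF polyring_mult[OF Ey_poly Ex_poly] p])
  fix i assume "i \<in> vars p"
  then have i: "i < n + d" using p by (auto simp: polyring_def)
  show "(Eyy n d (set \<alpha>) b * Exx n (b ` {..<d}) a) * (Var i - Const (pt n d a b i)) \<in> ideal_gen (n + d) (gens n k d \<alpha>)"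
  proof (cases "i < n")
    case True
    then show ?thesis using E_lin_x[OF b inj a True] by (simp add: pt_def)
  next
    case False
    define j where "j = i - n"
    have j: "j < d" "i = n + j" using i False by (auto simp: j_def)
    have "pt n d a b i = b j" using j by (simp add: pt_def)
    then have "(Eyy n d (set \<alpha>) b * Exx n (b ` {..<d}) a) * (Var i - Const (pt n d a b i)) =
        Exx n (b ` {..<d}) a * (Eyy n d (set \<alpha>) b * (Var (n + j) - Const (b j)))"
      using j by (simp add: ac_simps)
    also have "\<dots> \<in> ideal_gen (n + d) (gens n k d \<alpha>)"
      by (rule ig_mult[OF Ex_poly Ey_lin[OF b j(1)]])
    finally show ?thesis .
  qed
qed

lemma pt_Z:
  assumes b: "b \<in> PiE {..<d} (\<lambda>_. set \<alpha>)" and inj: "inj_on b {..<d}"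
    and a: "a \<in> PiE {..<n} (\<lambda>_. b ` {..<d})" and surj: "a ` {..<n} = b ` {..<d}"
  shows "pt n d a b \<in> Zset n d \<alpha>"
  unfolding Zset_def
proof (intro CollectI conjI allI impI)
  have bA: "b j \<in> set \<alpha>" if "j < d" for j using b that by (simp add: PiE_iff)
  fix i assume i: "i < n + d"
  show "pt n d a b i \<in> set \<alpha>"
  proof (cases "i < n")
    case True
    then have "a i \<in> b ` {..<d}" using a by (simp add: PiE_iff)
    then obtain j where j: "j < d" "a i = b j" by blast
    have "pt n d a b i = a i" using True by (simp add: pt_def)
    then show ?thesis using j bA by simp
  next
    case False
    then have j: "i - n < d" using i by simp
    have "pt n d a b i = b (i - n)" using False i by (simp add: pt_def)
    then show ?thesis using bA[OF j] by simp
  qed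
next
  fix i assume "n + d \<le> i" then show "pt n d a b i = 0" by (simp add: pt_def)
next
  show "inj_on (pt n d a b) {n..<n + d}"
  proof (rule inj_onI)
    fix x y assume x: "x \<in> {n..<n + d}" and y: "y \<in> {n..<n + d}" and e: "pt n d a b x = pt n d a b y"
    have "pt n d a b x = b (x - n)" "pt n d a b y = b (y - n)" using x y by (simp_all add: pt_def)
    then have "b (x - n) = b (y - n)" using e by simp
    moreover have "x - n \<in> {..<d}" "y - n \<in> {..<d}" using x y by auto
    ultimately have "x - n = y - n" using inj_onD[OF inj] by blast
    moreover have "x = n + (x - n)" "y = n + (y - n)" using x y by auto
    ultimately show "x = y" by metis
  qed
next
  have "pt n d a b ` {..<n} = a ` {..<n}"
    by (rule image_cong) (simp_all add: pt_def)
  also have "\<dots> = b ` {..<d}" by (rule surj)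
  also have "\<dots> = pt n d a b ` {n..<n + d}"
  proof (intro equalityI subsetI)
    fix y assume "y \<in> b ` {..<d}"
    then obtain j where j: "j < d" "y = b j" by blast
    then have "pt n d a b (n + j) = y" by (simp add: pt_def)
    moreover have "n + j \<in> {n..<n+d}" using j by simp
    ultimately show "y \<in> pt n d a b ` {n..<n + d}" by blast
  next
    fix y assume "y \<in> pt n d a b ` {n..<n + d}"
    then obtain i where i: "i \<in> {n..<n+d}" "y = pt n d a b i" by blast
    then have "y = b (i - n)" "i - n < d" by (auto simp: pt_def)
    then show "y \<in> b ` {..<d}" by blast
  qed
  finally show "pt n d a b ` {..<n} = pt n d a b ` {n..<n + d}" .
qed

lemma nonsurj_witness:
  fixes a b :: "nat \<Rightarrow> rat"
  assumes inj: "inj_on b {..<d}" and a: "a \<in> PiE {..<n} (\<lambda>_. b ` {..<d})"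
    and ns: "a ` {..<n} \<noteq> b ` {..<d}"
  shows "\<exists>r > n - d. Sf r (map a [0..<n]) (map b [0..<d]) \<noteq> 0"
proof (rule ccontr)
  assume "\<not> (\<exists>r > n - d. Sf r (map a [0..<n]) (map b [0..<d]) \<noteq> 0)"
  then have z: "\<And>r. r > length (map a [0..<n]) - length (map b [0..<d]) \<Longrightarrow> Sf r (map a [0..<n]) (map b [0..<d]) = 0"
    by auto
  have "length (map b [0..<d]) \<le> length (map a [0..<n])" using dk kn by simp
  from Sf_converse[OF this z] have "mset (map b [0..<d]) \<subseteq># mset (map a [0..<n])" .
  then have "set (map b [0..<d]) \<subseteq> set (map a [0..<n])"
    by (metis set_mset_mono set_mset_mset)
  then have "b ` {..<d} \<subseteq> a ` {..<n}" by (simp add: atLeast0LessThan)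
  moreover have "a ` {..<n} \<subseteq> b ` {..<d}" using a by auto
  ultimately show False using ns by blast
qed

lemma E_nonsurj:
  assumes b: "b \<in> PiE {..<d} (\<lambda>_. set \<alpha>)" and inj: "inj_on b {..<d}"
    and a: "a \<in> PiE {..<n} (\<lambda>_. b ` {..<d})" and ns: "a ` {..<n} \<noteq> b ` {..<d}"
  shows "Eyy n d (set \<alpha>) b * Exx n (b ` {..<d}) a \<in> ideal_gen (n + d) (gens n k d \<alpha>)"
proof -
  obtain r where r: "r > n - d" "Sf r (map a [0..<n]) (map b [0..<d]) \<noteq> 0"
    using nonsurj_witness[OF inj a ns] by blast
  let ?g = "Sf r (xs n) (ys n d)"
  have gG: "?g \<in> gens n k d \<alpha>" using r(1) unfolding gens_eq by blast
  then have gI: "?g \<in> ideal_gen (n + d) (gens n k d \<alpha>)" by (rule ig_gen)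
  have gp: "?g \<in> polyring (n + d)" using gG gens_poly by blast
  have ev: "eval ?g (pt n d a b) = Sf r (map a [0..<n]) (map b [0..<d])"
    by (simp add: eval_Sf map_eval_ys map_eval_xs map_pt_y map_pt_x)
  show ?thesis
    using kill_lemma[OF polyring_mult[OF Ey_poly Ex_poly] gI E_subst[OF b inj a gp]] ev r(2) by simp
qed

lemma hard_incl:
  "vanishing_ideal (n+d) (Zset n d \<alpha>) \<subseteq> ideal_gen (n+d) (gens n k d \<alpha>)"
proof
  let ?I = "ideal_gen (n + d) (gens n k d \<alpha>)"
  fix p assume "p \<in> vanishing_ideal (n+d) (Zset n d \<alpha>)"
  then have p: "p \<in> polyring (n + d)" and van: "\<And>z. z \<in> Zset n d \<alpha> \<Longrightarrow> eval p z = 0"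
    by (auto simp: vanishing_ideal_def)
  have Ane: "set \<alpha> \<noteq> {}" using len d1 dk by auto
  have "p = (\<Sum>b\<in>PiE {..<d} (\<lambda>_. set \<alpha>). Eyy n d (set \<alpha>) b) * p"
    using Ey_sum[OF finite_set Ane, where d = d and n = n] by simp
  also have "\<dots> = (\<Sum>b\<in>PiE {..<d} (\<lambda>_. set \<alpha>). Eyy n d (set \<alpha>) b * p)"
    by (simp add: sum_distrib_right)
  also have "\<dots> \<in> ?I"
  proof (rule ig_sum)
    fix b assume b: "b \<in> PiE {..<d} (\<lambda>_. set \<alpha>)"
    show "Eyy n d (set \<alpha>) b * p \<in> ?I"
    proof (cases "inj_on b {..<d}")
      case False
      then show ?thesis by (rule ig_mult_right[OF p Ey_nonin[OF b]])
    next
      case inj: True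
      let ?B = "b ` {..<d}"
      have "0 \<in> {..<d}" using d1 by simp
      then have Bne: "?B \<noteq> {}" by blast
      have "Eyy n d (set \<alpha>) b * p = Eyy n d (set \<alpha>) b * (\<Sum>a\<in>PiE {..<n} (\<lambda>_. ?B). Exx n ?B a) * p"
        using Ex_sum[OF finite_imageI[OF finite_lessThan] Bne, where n = n] by simp
      also have "\<dots> = (\<Sum>a\<in>PiE {..<n} (\<lambda>_. ?B). (Eyy n d (set \<alpha>) b * Exx n ?B a) * p)"
        by (simp only: sum_distrib_left sum_distrib_right)
      also have "\<dots> \<in> ?I"
      proof (rule ig_sum)
        fix a assume a: "a \<in> PiE {..<n} (\<lambda>_. ?B)"
        show "(Eyy n d (set \<alpha>) b * Exx n ?B a) * p \<in> ?I"
        proof (cases "a ` {..<n} = ?B")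
          case True
          have "eval p (pt n d a b) = 0" by (rule van[OF pt_Z[OF b inj a True]])
          then show ?thesis using E_subst[OF b inj a p] by simp
        next
          case False
          show ?thesis by (rule ig_mult_right[OF p E_nonsurj[OF b inj a False]])
        qed
      qed
      finally show ?thesis .
    qed
  qed
  finally show "p \<in> ?I" .
qed

end

theorem lemma3p2:
  fixes n k d :: nat and \<alpha> :: "rat list"
  assumes "1 \<le> d" "d \<le> k" "k \<le> n"
    and "length \<alpha> = k" "distinct \<alpha>"
  shows "vanishing_ideal (n+d) (Zset n d \<alpha>) = ideal_gen (n+d) (gens n k d \<alpha>)"
  using hard_incl[OF assms] easy_incl[OF assms(3,2,4,5)] by blast


end
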